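(* Assume the setting and algorithm described in the context. If $0<\alpha\le\min\Big\{\frac{1-\lambda^2}{16\lambda},\frac{\sqrt n}{\sqrt{8m}}\Big\}\frac1L$, then for all $k\ge0$, $$\mathbb E\big[\|y^{k+2}-Jy^{k+2}\|^2\big]\le\frac{1+\lambda^2}{2}\mathbb E\big[\|y^{k+1}-Jy^{k+1}\|^2\big]+\frac{30.5L^2}{1-\lambda^2}\mathbb E\big[\|x^k-Jx^k\|^2\big]+\frac{97L^2n}{8}\mathbb E[t^k]+\frac{16\lambda^2\alpha^2L^2n}{1-\lambda^2}\mathbb E\big[\|\overline{\nabla\mathbf f}(x^k)\|^2\big].$$
   Context: Setting. Let $n,m,p\ge1$ be integers and $\mathcal V=\{1,\dots,n\}$. For each $i\in\mathcal V$ and $j\in\{1,\dots,m\}$, $f_{i,j}:\mathbb R^p\to\mathbb R$ is differentiable and $L$-smooth for some $L>0$, i.e. $\|\nabla f_{i,j}(x)-\nabla f_{i,j}(y)\|\le L\|x-y\|$ for all $x,y\in\mathbb R^p$. Let $f_i:=\frac1m\sum_{j=1}^m f_{i,j}$ and $F:=\frac1n\sum_{i=1}^n f_i$, and assume $F^*:=\inf_{x\in\mathbb R^p}F(x)>-\infty$. Let $\underline W=(\underline w_{ir})\in\mathbb R^{n\times n}$ be a nonnegative, primitive, doubly stochastic matrix ($\underline W\mathbf 1_n=\mathbf 1_n$, $\mathbf 1_n^\top\underline W=\mathbf 1_n^\top$), and let $\lambda\in[0,1)$ be its second largest singular value. Any expression with $\lambda$ in a denominator is read as $+\infty$ when $\lambda=0$.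 Algorithm GT-SAGA with step-size $\alpha>0$: fix a deterministic $\bar x^0\in\mathbb R^p$; for all $i\in\mathcal V$ set $x_i^0=\bar x^0$, $z_{i,j}^0=x_i^0$ for all $j$, $y_i^0=0$, $g_i^{-1}=0$. For $k=0,1,2,\dots$ and every $i\in\mathcal V$: draw $\tau_i^k$ uniformly from $\{1,\dots,m\}$; set $g_i^k=\nabla f_{i,\tau_i^k}(x_i^k)-\nabla f_{i,\tau_i^k}(z_{i,\tau_i^k}^k)+\frac1m\sum_{j=1}^m\nabla f_{i,j}(z_{i,j}^k)$; set $y_i^{k+1}=\sum_{r=1}^n\underline w_{ir}(y_r^k+g_r^k-g_r^{k-1})$; set $x_i^{k+1}=\sum_{r=1}^n\underline w_{ir}(x_r^k-\alpha y_r^{k+1})$; draw $s_i^k$ uniformly from $\{1,\dots,m\}$; set $z_{i,j}^{k+1}=x_i^k$ if $j=s_i^k$ and $z_{i,j}^{k+1}=z_{i,j}^k$ otherwise. The family $\{\tau_i^k,s_i^k: i\in\mathcal V,k\ge0\}$ is independent. Notation. $x^k,y^k,g^k\in\mathbb R^{np}$ stack the $x_i^k$, $y_i^k$, $g_i^k$; $\nabla\mathbf f(x^k)\in\mathbb R^{np}$ stacks $\nabla f_i(x_i^k)$, $i=1,\dots,n$; $W=\underline W\otimes I_p$, $J=(\frac1n\mathbf 1_n\mathbf 1_n^\top)\otimes I_p$; $\bar x^k=\frac1n\sum_i x_i^k$, $\bar g^k=\frac1n\sum_i g_i^k$, $\overline{\nabla\mathbf f}(x^k)=\frac1n\sum_i\nabla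 f_i(x_i^k)$. $\mathcal F^0$ is the trivial $\sigma$-algebra and $\mathcal F^k=\sigma(\{\tau_i^t,s_i^t:i\in\mathcal V,\ t\le k-1\})$ for $k\ge1$. $t^k:=\frac1n\sum_{i=1}^n\frac1m\sum_{j=1}^m\|\bar x^k-z_{i,j}^k\|^2$. $\|\nabla\mathbf f(x^0)\|^2:=\sum_{i=1}^n\|\nabla f_i(\bar x^0)\|^2$. Norms are Euclidean (spectral for matrices); vector and matrix inequalities are entrywise. *)

theory Defs
  imports "HOL-Analysis.Analysis" "HOL-Probability.Product_PMF" "Jordan_Normal_Form.Char_Poly"
begin

definition nonneg_mat :: "real mat \<Rightarrow> bool" where
  "nonneg_mat A \<longleftrightarrow> (\<forall>i<dim_row A. \<forall>j<dim_col A. A $$ (i,j) \<ge> 0)"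

definition primitive_mat :: "real mat \<Rightarrow> bool" where
  "primitive_mat A \<longleftrightarrow> (\<exists>k>0. \<forall>i<dim_row A. \<forall>j<dim_col A. (A ^\<^sub>m k) $$ (i,j) > 0)"

definition doubly_stochastic :: "nat \<Rightarrow> real mat \<Rightarrow> bool" where
  "doubly_stochastic n A \<longleftrightarrow> A \<in> carrier_mat n n \<and>
     (\<forall>i<n. (\<Sum>r<n. A $$ (i,r)) = 1) \<and> (\<forall>r<n. (\<Sum>i<n. A $$ (i,r)) = 1)"

text \<open>Singular values of A: the nonnegative square roots of the eigenvalues (with multiplicity)
  of A^T A, listed in nonincreasing order. lam is the second largest singular value
  (convention: 0 if there is only one singular value).\<close>
definition singular_values :: "real mat \<Rightarrow> real list \<Rightarrow> bool" where
  "singular_values A ss \<longleftrightarrow> length ss = dim_col A \<and> sorted_wrt (\<ge>) ss \<and> (\<forall>s\<in>set ss. s \<ge> 0) \<and>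
     char_poly (transpose_mat A * A) = (\<Prod>s\<leftarrow>ss. [:-(s^2), 1:])"

definition second_singular_value :: "real mat \<Rightarrow> real \<Rightarrow> bool" where
  "second_singular_value A lam \<longleftrightarrow>
     (\<exists>ss. singular_values A ss \<and> lam = (if length ss \<ge> 2 then ss ! 1 else 0))"

text \<open>GT-SAGA. Nodes are 0..n-1, component functions 0..m-1.
  omega (k,i) = (tau_i^k, s_i^k) in {0..<m} x {0..<m}.
  G i j is the gradient of f_{i,j}. State at step k: (x^k, y^k, g^{k-1}, z^k).\<close>
fun gt_saga :: "nat \<Rightarrow> nat \<Rightarrow> real mat \<Rightarrow> real \<Rightarrow> (nat \<Rightarrow> nat \<Rightarrow> 'a::euclidean_space \<Rightarrow> 'a) \<Rightarrow> 'a
    \<Rightarrow> (nat \<times> nat \<Rightarrow> nat \<times> nat) \<Rightarrow> nat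
    \<Rightarrow> (nat \<Rightarrow> 'a) \<times> (nat \<Rightarrow> 'a) \<times> (nat \<Rightarrow> 'a) \<times> (nat \<Rightarrow> nat \<Rightarrow> 'a)" where
  "gt_saga n m W \<alpha> G x0 \<omega> 0 = ((\<lambda>i. x0), (\<lambda>i. 0), (\<lambda>i. 0), (\<lambda>i j. x0))"
| "gt_saga n m W \<alpha> G x0 \<omega> (Suc k) =
    (case gt_saga n m W \<alpha> G x0 \<omega> k of (x, y, gp, z) \<Rightarrow>
      let g = (\<lambda>i. G i (fst (\<omega> (k,i))) (x i) - G i (fst (\<omega> (k,i))) (z i (fst (\<omega> (k,i))))
                    + (1 / real m) *\<^sub>R (\<Sum>j<m. G i j (z i j)));
          y' = (\<lambda>i. \<Sum>r<n. W $$ (i,r) *\<^sub>R (y r + g r - gp r));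
          x' = (\<lambda>i. \<Sum>r<n. W $$ (i,r) *\<^sub>R (x r - \<alpha> *\<^sub>R y' r));
          z' = (\<lambda>i j. if j = snd (\<omega> (k,i)) then x i else z i j)
      in (x', y', g, z'))"

definition gx where "gx n m W \<alpha> G x0 \<omega> k = fst (gt_saga n m W \<alpha> G x0 \<omega> k)"
definition gy where "gy n m W \<alpha> G x0 \<omega> k = fst (snd (gt_saga n m W \<alpha> G x0 \<omega> k))"
definition gz where "gz n m W \<alpha> G x0 \<omega> k = snd (snd (snd (gt_saga n m W \<alpha> G x0 \<omega> k)))"

definition avg :: "nat \<Rightarrow> (nat \<Rightarrow> 'a::real_vector) \<Rightarrow> 'a" where
  "avg n v = (1 / real n) *\<^sub>R (\<Sum>i<n. v i)"

definition cons_err :: "nat \<Rightarrow> (nat \<Rightarrow> 'a::real_normed_vector) \<Rightarrow> real" where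
  "cons_err n v = (\<Sum>i<n. (norm (v i - avg n v))^2)"

definition draws :: "nat \<Rightarrow> nat \<Rightarrow> nat \<Rightarrow> (nat \<times> nat \<Rightarrow> nat \<times> nat) pmf" where
  "draws n m N = Pi_pmf ({0..<N} \<times> {0..<n}) (0,0) (\<lambda>_. pmf_of_set ({0..<m} \<times> {0..<m}))"

end

theory Submission
  imports Defs "Jordan_Normal_Form.Schur_Decomposition"
begin

lemma backsub_zero:
  fixes B :: "real mat" and x :: "real vec"
  assumes B: "B \<in> carrier_mat n n" and ut: "upper_triangular B"
    and x: "x \<in> carrier_vec n" and eq: "B *\<^sub>v x = x"
    and diag: "\<And>i. 1 \<le> i \<Longrightarrow> i < n \<Longrightarrow> B $$ (i,i) \<noteq> 1"
  shows "\<And>i. 1 \<le> i \<Longrightarrow> i < n \<Longrightarrow> x $ i = 0"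
proof -
  have main: "\<forall>i. 1 \<le> i \<longrightarrow> i < n \<longrightarrow> n - i \<le> d \<longrightarrow> x $ i = 0" for d
  proof (induction d)
    case 0 then show ?case by auto
  next
    case (Suc d)
    show ?case
    proof (intro allI impI)
      fix i assume i1: "1 \<le> i" and i2: "i < n" and d: "n - i \<le> Suc d"
      have hi: "x $ j = 0" if "i < j" "j < n" for j
        using Suc.IH that i1 d by auto
      have lo: "B $$ (i,j) = 0" if "j < i" for j
        using ut that i2 B unfolding upper_triangular_def by auto
      have "(B *\<^sub>v x) $ i = (\<Sum>j = 0..<n. B $$ (i,j) * x $ j)"
        using B x i2 by (auto simp: scalar_prod_def)
      also have "\<dots> = (\<Sum>j \<in> {0..<n}. if j = i then B $$ (i,i) * x $ i else 0)"
      proof (rule sum.cong[OF refl])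
        fix j assume j: "j \<in> {0..<n}"
        show "B $$ (i,j) * x $ j = (if j = i then B $$ (i,i) * x $ i else 0)"
        proof (cases "j < i")
          case True then show ?thesis using lo[OF True] by simp
        next
          case False
          show ?thesis
          proof (cases "j = i")
            case False2: False
            then have "i < j" using False by simp
            then show ?thesis using hi[of j] j False2 by simp
          qed simp
        qed
      qed
      also have "\<dots> = B $$ (i,i) * x $ i" using i2 by simp
      finally have "B $$ (i,i) * x $ i = x $ i" using eq by simp
      then have "(B $$ (i,i) - 1) * x $ i = 0" by (simp add: algebra_simps)
      then show "x $ i = 0" using diag[OF i1 i2] by simp
    qed
  qed
  fix i assume "1 \<le> i" "i < n"
  then show "x $ i = 0" using main[of n] by auto
qed

lemma eigen1_unique:
  fixes A :: "real mat"
  assumes A: "A \<in> carrier_mat n n"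
    and cp: "char_poly A = (\<Prod>e\<leftarrow>es. [:- e, 1:])"
    and es0: "es ! 0 = 1" and esi: "\<And>i. 1 \<le> i \<Longrightarrow> i < n \<Longrightarrow> es ! i \<noteq> 1"
    and u: "u \<in> carrier_vec n" "u \<noteq> 0\<^sub>v n" "A *\<^sub>v u = u"
    and w: "w \<in> carrier_vec n" "A *\<^sub>v w = w"
  shows "\<exists>c. w = c \<cdot>\<^sub>v u"
proof -
  obtain B P Q where sd: "schur_decomposition A es = (B,P,Q)" by (cases "schur_decomposition A es") auto
  from schur_decomposition[OF A cp sd]
  have sim: "similar_mat_wit A B P Q" and ut: "upper_triangular B" and dg: "diag_mat B = es" by auto
  from sim A have BPQ: "B \<in> carrier_mat n n" "P \<in> carrier_mat n n" "Q \<in> carrier_mat n n"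
    and PQ: "P * Q = 1\<^sub>m n" and QP: "Q * P = 1\<^sub>m n" and AA: "A = P * B * Q"
    unfolding similar_mat_wit_def Let_def by auto
  have Bdiag: "B $$ (i,i) = es ! i" if "i < n" for i
  proof -
    have "es ! i = diag_mat B ! i" using dg by simp
    also have "\<dots> = B $$ (i,i)" using that BPQ by (simp add: diag_mat_def)
    finally show ?thesis by simp
  qed
  have Av: "A *\<^sub>v v = P *\<^sub>v (B *\<^sub>v (Q *\<^sub>v v))" if v: "v \<in> carrier_vec n" for v
  proof -
    have "A *\<^sub>v v = (P * B) *\<^sub>v (Q *\<^sub>v v)"
      unfolding AA using assoc_mult_mat_vec[of "P*B" n n Q n v] BPQ v by auto
    also have "\<dots> = P *\<^sub>v (B *\<^sub>v (Q *\<^sub>v v))"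
      using assoc_mult_mat_vec[of P n n B n "Q *\<^sub>v v"] BPQ v by auto
    finally show ?thesis .
  qed
  have QPv: "Q *\<^sub>v (P *\<^sub>v v) = v" if v: "v \<in> carrier_vec n" for v
    using assoc_mult_mat_vec[of Q n n P n v] BPQ v QP by auto
  have backPQ: "P *\<^sub>v (Q *\<^sub>v v) = v" if "v \<in> carrier_vec n" for v
    using assoc_mult_mat_vec[of P n n Q n v] BPQ that PQ by auto
  have fix1: "B *\<^sub>v (Q *\<^sub>v v) = Q *\<^sub>v v" if v: "v \<in> carrier_vec n" "A *\<^sub>v v = v" for v
  proof -
    have "Q *\<^sub>v v = Q *\<^sub>v (A *\<^sub>v v)" using v by simp
    also have "\<dots> = Q *\<^sub>v (P *\<^sub>v (B *\<^sub>v (Q *\<^sub>v v)))" using Av[OF v(1)] by simp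
    also have "\<dots> = B *\<^sub>v (Q *\<^sub>v v)" using QPv BPQ v by simp
    finally show ?thesis by simp
  qed
  have zero: "(Q *\<^sub>v v) $ i = 0" if v: "v \<in> carrier_vec n" "A *\<^sub>v v = v" and i: "1 \<le> i" "i < n" for v i
    using backsub_zero[OF BPQ(1) ut _ fix1[OF v], of i] BPQ v i Bdiag esi by auto
  let ?x = "Q *\<^sub>v u" and ?y = "Q *\<^sub>v w"
  have xc: "?x \<in> carrier_vec n" "?y \<in> carrier_vec n" using BPQ u w by auto
  have n0: "0 < n" using u by (cases n) auto
  have dx: "dim_vec ?x = n" "dim_vec ?y = n" using BPQ by auto
  have x0: "?x $ 0 \<noteq> 0"
  proof
    assume h: "?x $ 0 = 0"
    have xz: "?x = 0\<^sub>v n"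
    proof (rule eq_vecI)
      fix i assume "i < dim_vec (0\<^sub>v n)"
      then have "i < n" by simp
      then show "?x $ i = 0\<^sub>v n $ i" using zero[OF u(1) u(3), of i] h by (cases "i = 0") auto
    next
      show "dim_vec ?x = dim_vec (0\<^sub>v n)" using dx by simp
    qed
    have "u = P *\<^sub>v 0\<^sub>v n" using backPQ[OF u(1)] xz by simp
    also have "\<dots> = 0\<^sub>v n"
      by (rule eq_vecI) (use BPQ in \<open>auto simp: scalar_prod_right_zero\<close>)
    finally show False using u by simp
  qed
  define c where "c = ?y $ 0 / ?x $ 0"
  have "?y = c \<cdot>\<^sub>v ?x"
  proof (intro eq_vecI)
    fix i assume "i < dim_vec (c \<cdot>\<^sub>v ?x)"
    then have i: "i < n" using xc BPQ by simp
    show "?y $ i = (c \<cdot>\<^sub>v ?x) $ i"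
    proof (cases "i = 0")
      case True
      have "(c \<cdot>\<^sub>v ?x) $ i = c * ?x $ i" using index_smult_vec(1)[of i ?x c] dx i by simp
      then show ?thesis using x0 True by (simp add: c_def)
    next
      case False
      have "(c \<cdot>\<^sub>v ?x) $ i = c * ?x $ i" using index_smult_vec(1)[of i ?x c] dx i by simp
      then show ?thesis using zero[OF u(1) u(3), of i] zero[OF w, of i] i False by simp
    qed
  qed (use xc in auto)
  then have "w = P *\<^sub>v (c \<cdot>\<^sub>v ?x)" using backPQ[OF w(1)] by simp
  also have "\<dots> = c \<cdot>\<^sub>v u" using backPQ[OF u(1)] BPQ xc by (simp add: mult_mat_vec)
  finally show ?thesis by blast
qed

definition wm :: "nat \<Rightarrow> real mat \<Rightarrow> (nat \<Rightarrow> 'b::real_vector) \<Rightarrow> nat \<Rightarrow> 'b" where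
  "wm n W v i = (\<Sum>r<n. W $$ (i,r) *\<^sub>R v r)"

lemma wm_real: "wm n W (v :: nat \<Rightarrow> real) i = (\<Sum>r<n. W $$ (i,r) * v r)"
  by (simp add: wm_def)

lemma quad_nonpos_zero:
  fixes c1 c2 :: real
  assumes "\<And>t. 2 * t * c1 + t^2 * c2 \<le> 0" and "c1 \<ge> 0"
  shows "c1 = 0"
proof -
  define d where "d = \<bar>c2\<bar> + 1"
  have d: "d > 0" "d \<ge> 1" by (auto simp: d_def)
  have "2 * (c1/d) * c1 + (c1/d)^2 * c2 \<le> 0" using assms(1) .
  then have "(2 * (c1/d) * c1 + (c1/d)^2 * c2) * d^2 \<le> 0"
    using d by (simp add: mult_nonpos_nonneg)
  moreover have "(2 * (c1/d) * c1 + (c1/d)^2 * c2) * d^2 = c1^2 * (2 * d + c2)"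
    using d by (simp add: field_simps power2_eq_square)
  ultimately have "c1^2 * (2 * d + c2) \<le> 0" by simp
  moreover have "2 * d + c2 > 0" by (auto simp: d_def abs_if)
  ultimately have "c1^2 \<le> 0" by (simp add: mult_le_0_iff)
  then show ?thesis by simp
qed

lemma ds_facts:
  assumes "doubly_stochastic n W"
  shows "W \<in> carrier_mat n n" "\<And>i. i < n \<Longrightarrow> (\<Sum>r<n. W $$ (i,r)) = 1"
    "\<And>r. r < n \<Longrightarrow> (\<Sum>i<n. W $$ (i,r)) = 1"
  using assms unfolding doubly_stochastic_def by auto

lemma sum_wm:
  assumes "doubly_stochastic n W"
  shows "(\<Sum>i<n. wm n W v i) = (\<Sum>r<n. v r)"
proof -
  have "(\<Sum>i<n. wm n W v i) = (\<Sum>r<n. (\<Sum>i<n. W $$ (i,r)) *\<^sub>R v r)"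
    unfolding wm_def scaleR_sum_left by (rule sum.swap)
  also have "\<dots> = (\<Sum>r<n. v r)" using ds_facts(3)[OF assms] by simp
  finally show ?thesis .
qed

lemma wm_const:
  assumes "doubly_stochastic n W" "i < n"
  shows "wm n W (\<lambda>_. c) i = c"
  using ds_facts(2)[OF assms] by (simp add: wm_def scaleR_sum_left[symmetric])

lemma AtA_mult:
  fixes W :: "real mat"
  assumes W: "W \<in> carrier_mat n n" and r: "r < n"
  shows "((transpose_mat W * W) *\<^sub>v vec n v) $ r = (\<Sum>i<n. W $$ (i,r) * wm n W v i)"
proof -
  have "((transpose_mat W * W) *\<^sub>v vec n v) $ r = (\<Sum>i<n. W $$ (i,r) * (\<Sum>s<n. W $$ (i,s) * v s))"
    using W r by (simp add: scalar_prod_def atLeast0LessThan)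
  then show ?thesis by (simp add: wm_real)
qed

lemma spec_real:
  fixes W :: "real mat" and v :: "nat \<Rightarrow> real"
  assumes DS: "doubly_stochastic n W" and lamd: "second_singular_value W lam" and lam1: "lam < 1"
    and s0: "(\<Sum>i<n. v i) = 0"
  shows "(\<Sum>i<n. (wm n W v i)^2) \<le> lam^2 * (\<Sum>i<n. (v i)^2)"
proof -
  have Wc: "W \<in> carrier_mat n n" using ds_facts[OF DS] by simp
  obtain ss where sv: "singular_values W ss" and lamss: "lam = (if 2 \<le> length ss then ss ! 1 else 0)"
    using lamd unfolding second_singular_value_def by blast
  have lss: "length ss = n" and srt: "sorted_wrt (\<ge>) ss" and sge: "\<forall>s\<in>set ss. 0 \<le> s"
    and cp: "char_poly (transpose_mat W * W) = (\<Prod>s\<leftarrow>ss. [:- (s^2), 1:])"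
    using sv Wc unfolding singular_values_def by auto
  have lam0: "lam \<ge> 0" using lamss sge lss by (auto simp: nth_mem)
  have lam2: "lam^2 < 1" using lam0 lam1 by (simp add: power_less_one_iff abs_square_less_1)
  define R where "R = (\<lambda>x::nat\<Rightarrow>real. \<Sum>i<n. (wm n W x i)^2)"
  define N where "N = (\<lambda>x::nat\<Rightarrow>real. \<Sum>i<n. (x i)^2)"
  have N0: "N x \<ge> 0" for x unfolding N_def by (simp add: sum_nonneg)
  have Nzero: "x i = 0" if "N x = 0" "i < n" for x i
  proof -
    have "(x i)^2 \<le> N x" unfolding N_def using that(2) by (intro member_le_sum) auto
    then show ?thesis using that(1) by simp
  qed
  have Rzero: "R x = 0" if "N x = 0" for x
    unfolding R_def wm_real using Nzero[OF that] by simp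
  show ?thesis
  proof (cases "N v = 0")
    case True then show ?thesis using Rzero[OF True] unfolding R_def N_def by simp
  next
    case vnz: False
    have n2: "n \<ge> 2"
    proof (rule ccontr)
      assume "\<not> n \<ge> 2"
      then have "n = 0 \<or> n = 1" by auto
      then have "N v = 0" using s0 unfolding N_def by auto
      then show False using vnz by simp
    qed
    have lamss1: "lam = ss ! 1" using lamss lss n2 by simp
    define K0 where "K0 = PiE UNIV (\<lambda>i. if i < n then {-1..1} else {0::real})"
    define K where "K = K0 \<inter> {x. (\<Sum>i<n. x i) = 0} \<inter> {x. N x = 1}"
    have ccoord: "continuous_on UNIV (\<lambda>x::nat\<Rightarrow>real. x i)" for i by simp
    have "compactin (product_topology (\<lambda>i. euclidean) UNIV) K0"
      unfolding K0_def by (subst compactin_PiE) (auto simp: compactin_euclidean_iff)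
    then have "compact K0" by (simp add: euclidean_product_topology compactin_euclidean_iff)
    moreover have "closed {x::nat\<Rightarrow>real. (\<Sum>i<n. x i) = 0}"
      by (intro closed_Collect_eq continuous_intros ccoord)
    moreover have "closed {x::nat\<Rightarrow>real. N x = 1}"
      unfolding N_def by (intro closed_Collect_eq continuous_intros ccoord)
    ultimately have cK: "compact K" unfolding K_def by (intro compact_Int_closed)
    have "continuous_on UNIV R"
      unfolding R_def wm_real by (intro continuous_intros ccoord)
    then have Rcont: "continuous_on K R" by (rule continuous_on_subset) simp
    have norm_in: "(\<lambda>i. if i < n then x i / sqrt (N x) else 0) \<in> K
        \<and> R (\<lambda>i. if i < n then x i / sqrt (N x) else 0) = R x / N x"
      if xs: "(\<Sum>i<n. x i) = 0" and xn: "N x \<noteq> 0" for x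
    proof -
      define y where "y = (\<lambda>i. if i < n then x i / sqrt (N x) else 0)"
      have Npos: "N x > 0" using N0[of x] xn by simp
      have "y \<in> K0"
      proof -
        have hb: "\<bar>x i / sqrt (N x)\<bar> \<le> 1" if "i < n" for i
        proof -
          have "(x i)^2 \<le> N x" unfolding N_def using that by (intro member_le_sum) auto
          then have "\<bar>x i\<bar>^2 \<le> N x" by simp
          then have "\<bar>x i\<bar> \<le> sqrt (N x)" by (rule real_le_rsqrt)
          then show ?thesis using Npos by (simp add: abs_div divide_le_eq_1)
        qed
        have "-1 \<le> x i / sqrt (N x) \<and> x i / sqrt (N x) \<le> 1" if "i < n" for i
        proof -
          have "x i / sqrt (N x) \<le> 1" using abs_le_D1[OF hb[OF that]] .
          moreover have "- (x i / sqrt (N x)) \<le> 1" using abs_le_D2[OF hb[OF that]] .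
          ultimately show ?thesis by linarith
        qed
        then show ?thesis unfolding K0_def y_def by auto
      qed
      moreover have "(\<Sum>i<n. y i) = 0" unfolding y_def using xs by (simp add: sum_divide_distrib[symmetric])
      moreover have "N y = 1"
      proof -
        have "N y = (\<Sum>i<n. (x i)^2 / N x)"
          unfolding N_def y_def using Npos by (intro sum.cong refl) (simp add: power_divide sum_nonneg)
        also have "\<dots> = N x / N x" unfolding sum_divide_distrib[symmetric] N_def ..
        also have "\<dots> = 1" using Npos by simp
        finally show ?thesis .
      qed
      moreover have "R y = R x / N x"
      proof -
        have "wm n W y i = wm n W x i / sqrt (N x)" for i
        proof -
          have "wm n W y i = (\<Sum>r<n. W $$ (i,r) * x r / sqrt (N x))"
            unfolding wm_real y_def by (intro sum.cong) auto
          then show ?thesis unfolding wm_real by (simp add: sum_divide_distrib)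
        qed
        then show ?thesis unfolding R_def using Npos by (simp add: power_divide sum_divide_distrib)
      qed
      ultimately show ?thesis unfolding K_def y_def by auto
    qed
    have Kne: "K \<noteq> {}" using norm_in[OF s0 vnz] by auto
    obtain vs where vsK: "vs \<in> K" and vsmax: "\<And>y. y \<in> K \<Longrightarrow> R y \<le> R vs"
      using continuous_attains_sup[OF cK Kne Rcont] by blast
    define \<rho> where "\<rho> = R vs"
    have vs0: "(\<Sum>i<n. vs i) = 0" and vsN: "N vs = 1" using vsK unfolding K_def by auto
    have bound: "R x \<le> \<rho> * N x" if xs: "(\<Sum>i<n. x i) = 0" for x
    proof (cases "N x = 0")
      case True then show ?thesis using Rzero[OF True] by simp
    next
      case False
      have Npos: "N x > 0" using N0[of x] False by simp
      have "R x / N x \<le> \<rho>"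
        using vsmax[OF conjunct1[OF norm_in[OF xs False]]] conjunct2[OF norm_in[OF xs False]]
        unfolding \<rho>_def by simp
      then show ?thesis using Npos by (simp add: divide_le_eq mult.commute)
    qed
    have rowsum: "(\<Sum>r<n. W $$ (i,r) * c) = c" if "i < n" for i c
      using ds_facts(2)[OF DS that] by (simp add: sum_distrib_right[symmetric])
    have colsum: "(\<Sum>i<n. W $$ (i,r) * c) = c" if "r < n" for r c
      using ds_facts(3)[OF DS that] by (simp add: sum_distrib_right[symmetric])
    define u where "u = (\<lambda>r. (\<Sum>i<n. W $$ (i,r) * wm n W vs i) - \<rho> * vs r)"
    have u0: "(\<Sum>r<n. u r) = 0"
    proof -
      have "(\<Sum>r<n. \<Sum>i<n. W $$ (i,r) * wm n W vs i) = (\<Sum>i<n. \<Sum>r<n. W $$ (i,r) * wm n W vs i)"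
        by (rule sum.swap)
      also have "\<dots> = (\<Sum>i<n. wm n W vs i)" by (intro sum.cong refl) (simp add: rowsum)
      also have "\<dots> = 0" using sum_wm[OF DS, of vs] vs0 by simp
      finally show ?thesis unfolding u_def using vs0 by (simp add: sum_subtractf sum_distrib_left[symmetric])
    qed
    define Bi where "Bi = (\<Sum>i<n. wm n W vs i * wm n W u i)"
    define Ip where "Ip = (\<Sum>r<n. vs r * u r)"
    have quad: "2 * t * (Bi - \<rho> * Ip) + t^2 * (R u - \<rho> * N u) \<le> 0" for t
    proof -
      define xt where "xt = (\<lambda>r. vs r + t * u r)"
      have wmx: "wm n W xt i = wm n W vs i + t * wm n W u i" for i
        unfolding wm_real xt_def by (simp add: distrib_left sum.distrib sum_distrib_left mult.left_commute)
      have Rx: "R xt = R vs + 2 * t * Bi + t^2 * R u"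
        unfolding R_def wmx Bi_def
        by (simp add: power2_sum sum.distrib sum_distrib_left power_mult_distrib mult.assoc mult.left_commute)
      have Nx: "N xt = N vs + 2 * t * Ip + t^2 * N u"
        unfolding N_def xt_def Ip_def
        by (simp add: power2_sum sum.distrib sum_distrib_left power_mult_distrib mult.assoc mult.left_commute)
      have "(\<Sum>i<n. xt i) = 0" unfolding xt_def using vs0 u0 by (simp add: sum.distrib sum_distrib_left[symmetric])
      then have "R xt \<le> \<rho> * N xt" by (rule bound)
      then show ?thesis unfolding Rx Nx \<rho>_def[symmetric] vsN by (simp add: algebra_simps)
    qed
    have BiIp: "Bi - \<rho> * Ip = (\<Sum>r<n. (u r)^2)"
    proof -
      have "Bi = (\<Sum>i<n. \<Sum>r<n. wm n W vs i * (W $$ (i,r) * u r))"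
        unfolding Bi_def wm_real by (simp add: sum_distrib_left)
      also have "\<dots> = (\<Sum>r<n. \<Sum>i<n. wm n W vs i * (W $$ (i,r) * u r))" by (rule sum.swap)
      also have "\<dots> = (\<Sum>r<n. u r * (\<Sum>i<n. W $$ (i,r) * wm n W vs i))"
        by (simp add: sum_distrib_left mult.commute mult.left_commute)
      finally have "Bi - \<rho> * Ip = (\<Sum>r<n. u r * (\<Sum>i<n. W $$ (i,r) * wm n W vs i)) - (\<Sum>r<n. u r * (\<rho> * vs r))"
        unfolding Ip_def by (simp add: sum_distrib_left mult.commute mult.left_commute)
      also have "\<dots> = (\<Sum>r<n. u r * u r)"
        unfolding sum_subtractf[symmetric] by (simp add: u_def right_diff_distrib)
      finally show ?thesis by (simp add: power2_eq_square)
    qed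
    have "(\<Sum>r<n. (u r)^2) = 0"
      using quad_nonpos_zero[of "\<Sum>r<n. (u r)^2" "R u - \<rho> * N u"] quad BiIp by (simp add: sum_nonneg)
    then have uz: "u r = 0" if "r < n" for r
      using that by (simp add: sum_nonneg_eq_0_iff)
    have eig: "(\<Sum>i<n. W $$ (i,r) * wm n W vs i) = \<rho> * vs r" if "r < n" for r
      using uz[OF that] unfolding u_def by simp
    define A where "A = transpose_mat W * W"
    have Ac: "A \<in> carrier_mat n n" unfolding A_def using Wc by auto
    have roots: "\<exists>j<n. x = (ss ! j)^2" if "eigenvalue A x" for x
    proof -
      have "poly (char_poly A) x = 0" using that eigenvalue_root_char_poly[OF Ac] by simp
      then have "(\<Prod>s\<leftarrow>ss. poly [:- (s^2), 1:] x) = 0" using cp unfolding A_def by (simp add: poly_prod_list o_def)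
      then obtain s where "s \<in> set ss" "x - s^2 = 0" by (auto simp: prod_list_zero_iff)
      then obtain j where "j < length ss" "s = ss ! j" by (auto simp: in_set_conv_nth)
      then show ?thesis using \<open>x - s^2 = 0\<close> lss by auto
    qed
    have vsvec: "vec n vs \<noteq> 0\<^sub>v n"
    proof
      assume h: "vec n vs = 0\<^sub>v n"
      have "vs r = 0" if "r < n" for r using arg_cong[OF h, of "\<lambda>v. v $ r"] that by simp
      then have "N vs = 0" unfolding N_def by simp
      then show False using vsN by simp
    qed
    have evs: "A *\<^sub>v vec n vs = \<rho> \<cdot>\<^sub>v vec n vs"
      by (rule eq_vecI) (use Ac in \<open>auto simp: A_def AtA_mult[OF Wc] eig\<close>)
    have "eigenvalue A \<rho>" unfolding eigenvalue_def eigenvector_def using evs vsvec Ac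
      by (auto intro!: exI[of _ "vec n vs"])
    then obtain j where j: "j < n" "\<rho> = (ss ! j)^2" using roots by blast
    define one where "one = vec n (\<lambda>_. 1::real)"
    have ev1: "A *\<^sub>v one = one"
      by (rule eq_vecI) (use Ac ds_facts(3)[OF DS] in \<open>auto simp: A_def one_def AtA_mult[OF Wc] wm_const[OF DS]\<close>)
    have onenz: "one \<noteq> 0\<^sub>v n"
    proof
      assume "one = 0\<^sub>v n"
      then have "one $ 0 = 0" using n2 by simp
      then show False unfolding one_def using n2 by simp
    qed
    have "eigenvalue A 1" unfolding eigenvalue_def eigenvector_def using ev1 onenz Ac
      by (auto intro!: exI[of _ one] simp: one_def)
    then obtain j1 where j1: "j1 < n" "1 = (ss ! j1)^2" using roots by blast
    have ssge: "ss ! i \<ge> 0" if "i < n" for i using sge lss that by (auto simp: nth_mem)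
    have le1: "(ss ! i)^2 \<le> lam^2" if "1 \<le> i" "i < n" for i
    proof -
      have "ss ! i \<le> ss ! 1"
      proof (cases "i = 1")
        case False
        then have "1 < i" using that by simp
        then show ?thesis using sorted_wrt_nth_less[OF srt, of 1 i] that lss by simp
      qed simp
      then show ?thesis unfolding lamss1 using ssge[OF that(2)] by (intro power_mono) auto
    qed
    have rho_le: "\<rho> \<le> lam^2"
    proof (cases "j = 0")
      case False then show ?thesis using le1[of j] j by simp
    next
      case True
      show ?thesis
      proof (rule ccontr)
        assume "\<not> \<rho> \<le> lam^2"
        have "j1 = 0"
        proof (rule ccontr)
          assume "j1 \<noteq> 0"
          then have "1 \<le> lam^2" using le1[of j1] j1 by simp
          then show False using lam2 by simp
        qed
        then have rho1: "\<rho> = 1" using j1 j True by simp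
        define es where "es = map (\<lambda>s. s^2) ss"
        have cpes: "char_poly A = (\<Prod>e\<leftarrow>es. [:- e, 1:])"
          using cp unfolding A_def es_def by (simp add: o_def)
        have es0: "es ! 0 = 1" using j1 \<open>j1 = 0\<close> lss n2 unfolding es_def by simp
        have esi: "es ! i \<noteq> 1" if "1 \<le> i" "i < n" for i
          using le1[OF that] lam2 lss that unfolding es_def by auto
        have evs1: "A *\<^sub>v vec n vs = vec n vs" using evs rho1 by simp
        obtain c where c: "vec n vs = c \<cdot>\<^sub>v one"
          using eigen1_unique[OF Ac cpes es0 esi _ onenz ev1 _ evs1] unfolding one_def by auto
        have vsc: "vs r = c" if "r < n" for r
          using arg_cong[OF c, of "\<lambda>v. v $ r"] that unfolding one_def by simp
        have "(\<Sum>r<n. vs r) = real n * c" using vsc by simp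
        then have "c = 0" using vs0 n2 by simp
        then have "N vs = 0" unfolding N_def using vsc by simp
        then show False using vsN by simp
      qed
    qed
    have "R v \<le> \<rho> * N v" using bound[OF s0] .
    also have "\<dots> \<le> lam^2 * N v" using rho_le N0[of v] by (intro mult_right_mono)
    finally show ?thesis unfolding R_def N_def .
  qed
qed


lemma norm_sq_basis: "(norm (x::'a::euclidean_space))^2 = (\<Sum>b\<in>Basis. (x \<bullet> b)^2)"
proof -
  have "(norm x)^2 = x \<bullet> x" by (simp add: power2_norm_eq_inner)
  also have "\<dots> = (\<Sum>b\<in>Basis. (x \<bullet> b) * (x \<bullet> b))" by (rule euclidean_inner)
  finally show ?thesis by (simp add: power2_eq_square)
qed

lemma wm_inner: "wm n W v i \<bullet> b = wm n W (\<lambda>r. v r \<bullet> b) i"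
  by (simp add: wm_def wm_real inner_sum_left)

lemma spec_vec:
  fixes W :: "real mat" and v :: "nat \<Rightarrow> 'a::euclidean_space"
  assumes DS: "doubly_stochastic n W" and lamd: "second_singular_value W lam" and lam1: "lam < 1"
    and s0: "(\<Sum>i<n. v i) = 0"
  shows "(\<Sum>i<n. (norm (wm n W v i))^2) \<le> lam^2 * (\<Sum>i<n. (norm (v i))^2)"
proof -
  have "(\<Sum>i<n. (norm (wm n W v i))^2) = (\<Sum>b\<in>Basis. \<Sum>i<n. (wm n W (\<lambda>r. v r \<bullet> b) i)^2)"
    unfolding norm_sq_basis wm_inner by (rule sum.swap)
  also have "\<dots> \<le> (\<Sum>b\<in>(Basis::'a set). lam^2 * (\<Sum>i<n. (v i \<bullet> b)^2))"
  proof (rule sum_mono)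
    fix b :: 'a
    have "(\<Sum>i<n. v i \<bullet> b) = 0" using s0 by (simp add: inner_sum_left[symmetric])
    then show "(\<Sum>i<n. (wm n W (\<lambda>r. v r \<bullet> b) i)^2) \<le> lam^2 * (\<Sum>i<n. (v i \<bullet> b)^2)"
      by (rule spec_real[OF DS lamd lam1])
  qed
  also have "\<dots> = lam^2 * (\<Sum>i<n. (norm (v i))^2)"
    unfolding norm_sq_basis sum_distrib_left[symmetric] by (subst sum.swap) simp
  finally show ?thesis .
qed

lemma expect_fin_sum:
  fixes f :: "'a \<Rightarrow> real"
  assumes "finite (set_pmf M)"
  shows "measure_pmf.expectation M f = (\<Sum>a\<in>set_pmf M. pmf M a * f a)"
  by (subst integral_measure_pmf[OF assms]) auto

lemma expect_pair_swap:
  fixes F :: "'a \<times> 'b \<Rightarrow> real"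
  assumes p: "finite (set_pmf p)" and q: "finite (set_pmf q)"
  shows "measure_pmf.expectation (pair_pmf p q) F = measure_pmf.expectation q (\<lambda>b. measure_pmf.expectation p (\<lambda>a. F (a,b)))"
proof -
  have fs: "finite (set_pmf (pair_pmf p q))" using p q by (simp add: set_pair_pmf)
  have "measure_pmf.expectation (pair_pmf p q) F = (\<Sum>x\<in>set_pmf p \<times> set_pmf q. pmf (pair_pmf p q) x * F x)"
    using expect_fin_sum[OF fs] by (simp add: set_pair_pmf)
  also have "\<dots> = (\<Sum>x\<in>set_pmf p \<times> set_pmf q. case x of (a,b) \<Rightarrow> pmf p a * pmf q b * F (a,b))"
    by (intro sum.cong refl) (auto simp: pmf_pair)
  also have "\<dots> = (\<Sum>a\<in>set_pmf p. \<Sum>b\<in>set_pmf q. pmf p a * pmf q b * F (a,b))"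
    by (simp add: sum.cartesian_product)
  also have "\<dots> = (\<Sum>b\<in>set_pmf q. \<Sum>a\<in>set_pmf p. pmf p a * pmf q b * F (a,b))"
    by (rule sum.swap)
  also have "\<dots> = (\<Sum>b\<in>set_pmf q. pmf q b * (\<Sum>a\<in>set_pmf p. pmf p a * F (a,b)))"
    by (simp add: sum_distrib_left mult.commute mult.left_commute)
  also have "\<dots> = measure_pmf.expectation q (\<lambda>b. measure_pmf.expectation p (\<lambda>a. F (a,b)))"
    using expect_fin_sum[OF q] expect_fin_sum[OF p] by simp
  finally show ?thesis .
qed

lemma finite_set_Pi_pmf:
  assumes "finite A" "\<And>x. x \<in> A \<Longrightarrow> finite (set_pmf (p x))"
  shows "finite (set_pmf (Pi_pmf A dflt p))"
  using assms by (simp add: set_Pi_pmf finite_PiE_dflt)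

lemma expect_split:
  fixes F :: "('i \<Rightarrow> 'a) \<Rightarrow> real"
  assumes I: "finite I" and j: "j \<in> I" and fp: "\<And>i. i \<in> I \<Longrightarrow> finite (set_pmf (p i))"
  shows "measure_pmf.expectation (Pi_pmf I d p) F =
         measure_pmf.expectation (Pi_pmf (I - {j}) d p) (\<lambda>f. measure_pmf.expectation (p j) (\<lambda>y. F (f(j := y))))"
proof -
  have Ieq: "I = insert j (I - {j})" using j by auto
  have "Pi_pmf I d p = map_pmf (\<lambda>(y,f). f(j:=y)) (pair_pmf (p j) (Pi_pmf (I - {j}) d p))"
    by (subst Ieq, rule Pi_pmf_insert) (use I in auto)
  then have "measure_pmf.expectation (Pi_pmf I d p) F =
      measure_pmf.expectation (pair_pmf (p j) (Pi_pmf (I - {j}) d p)) (\<lambda>x. F ((snd x)(j := fst x)))"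
    by (simp add: case_prod_beta)
  also have "\<dots> = measure_pmf.expectation (Pi_pmf (I - {j}) d p) (\<lambda>f. measure_pmf.expectation (p j) (\<lambda>y. F (f(j := y))))"
    using expect_pair_swap[OF fp[OF j] finite_set_Pi_pmf[of "I-{j}" p d], of "\<lambda>x. F ((snd x)(j := fst x))"] I fp
    by auto
  finally show ?thesis .
qed

lemma expect_split_inv:
  fixes H :: "('i \<Rightarrow> 'a) \<Rightarrow> real"
  assumes I: "finite I" and j: "j \<in> I" and fp: "\<And>i. i \<in> I \<Longrightarrow> finite (set_pmf (p i))"
    and inv: "\<And>f y. H (f(j := y)) = H f"
  shows "measure_pmf.expectation (Pi_pmf I d p) H = measure_pmf.expectation (Pi_pmf (I - {j}) d p) H"
proof -
  have "measure_pmf.expectation (Pi_pmf I d p) H =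
         measure_pmf.expectation (Pi_pmf (I - {j}) d p) (\<lambda>f. measure_pmf.expectation (p j) (\<lambda>y. H (f(j := y))))"
    by (rule expect_split[OF I j fp])
  also have "\<dots> = measure_pmf.expectation (Pi_pmf (I - {j}) d p) H"
    unfolding inv by simp
  finally show ?thesis .
qed

lemma expect_split_le:
  fixes F H :: "('i \<Rightarrow> 'a) \<Rightarrow> real"
  assumes I: "finite I" and j: "j \<in> I" and fp: "\<And>i. i \<in> I \<Longrightarrow> finite (set_pmf (p i))"
    and inv: "\<And>f y. H (f(j := y)) = H f"
    and le: "\<And>f. measure_pmf.expectation (p j) (\<lambda>y. F (f(j := y))) \<le> H f"
  shows "measure_pmf.expectation (Pi_pmf I d p) F \<le> measure_pmf.expectation (Pi_pmf I d p) H"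
proof -
  have fin: "finite (set_pmf (Pi_pmf (I - {j}) d p))" using I fp by (intro finite_set_Pi_pmf) auto
  have "measure_pmf.expectation (Pi_pmf I d p) F =
         measure_pmf.expectation (Pi_pmf (I - {j}) d p) (\<lambda>f. measure_pmf.expectation (p j) (\<lambda>y. F (f(j := y))))"
    by (rule expect_split[OF I j fp])
  also have "\<dots> \<le> measure_pmf.expectation (Pi_pmf (I - {j}) d p) H"
    by (intro integral_mono integrable_measure_pmf_finite fin le)
  also have "\<dots> = measure_pmf.expectation (Pi_pmf I d p) H"
    by (rule expect_split_inv[OF I j fp inv, symmetric])
  finally show ?thesis .
qed

lemma expect_split_zero:
  fixes F :: "('i \<Rightarrow> 'a) \<Rightarrow> real"
  assumes I: "finite I" and j: "j \<in> I" and fp: "\<And>i. i \<in> I \<Longrightarrow> finite (set_pmf (p i))"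
    and z: "\<And>f. measure_pmf.expectation (p j) (\<lambda>y. F (f(j := y))) = 0"
  shows "measure_pmf.expectation (Pi_pmf I d p) F = 0"
  using expect_split[OF I j fp, where d=d and F=F] z by simp

definition nsq :: "nat \<Rightarrow> (nat \<Rightarrow> 'a::real_inner) \<Rightarrow> real" where
  "nsq n v = (\<Sum>i<n. (norm (v i))^2)"
definition ip :: "nat \<Rightarrow> (nat \<Rightarrow> 'a::real_inner) \<Rightarrow> (nat \<Rightarrow> 'a) \<Rightarrow> real" where
  "ip n u v = (\<Sum>i<n. u i \<bullet> v i)"
definition pc :: "nat \<Rightarrow> (nat \<Rightarrow> 'a::real_vector) \<Rightarrow> nat \<Rightarrow> 'a" where
  "pc n v = (\<lambda>i. v i - avg n v)"

lemma nsq_nonneg: "nsq n v \<ge> 0" by (simp add: nsq_def sum_nonneg)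

lemma cons_err_pc: "cons_err n v = nsq n (pc n v)" by (simp add: cons_err_def nsq_def pc_def)

lemma nsq_add: "nsq n (\<lambda>i. u i + v i) = nsq n u + 2 * ip n u v + nsq n v"
  unfolding nsq_def ip_def
  by (simp add: power2_norm_eq_inner inner_add_left inner_add_right inner_commute sum.distrib sum_distrib_left)

lemma nsq_diff: "nsq n (\<lambda>i. u i - v i) = nsq n u - 2 * ip n u v + nsq n v"
  unfolding nsq_def ip_def
  by (simp add: power2_norm_eq_inner inner_diff_left inner_diff_right inner_commute sum.distrib sum_subtractf sum_distrib_left)

lemma young_real: fixes a b \<eta> :: real assumes "\<eta> > 0"
  shows "2 * a * b \<le> \<eta> * a^2 + (1/\<eta>) * b^2"
proof -
  have "\<eta> * (\<eta> * a^2 + (1/\<eta>) * b^2 - 2 * a * b) = (\<eta> * a - b)^2"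
    using assms by (simp add: field_simps power2_eq_square)
  also have "\<dots> \<ge> 0" by simp
  finally have "\<eta> * (\<eta> * a^2 + (1/\<eta>) * b^2 - 2 * a * b) \<ge> 0" .
  then have "\<eta> * a^2 + (1/\<eta>) * b^2 - 2 * a * b \<ge> 0" using assms by (simp add: zero_le_mult_iff)
  then show ?thesis by simp
qed

lemma young_inner: fixes u v :: "'a::real_inner" assumes "\<eta> > 0"
  shows "2 * (u \<bullet> v) \<le> \<eta> * (norm u)^2 + (1/\<eta>) * (norm v)^2"
proof -
  have "u \<bullet> v \<le> norm u * norm v" by (rule norm_cauchy_schwarz)
  then have "2 * (u \<bullet> v) \<le> 2 * norm u * norm v" by simp
  also have "\<dots> \<le> \<eta> * (norm u)^2 + (1/\<eta>) * (norm v)^2" by (rule young_real[OF assms])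
  finally show ?thesis .
qed

lemma ip_young: assumes "\<eta> > 0" shows "2 * ip n u v \<le> \<eta> * nsq n u + (1/\<eta>) * nsq n v"
proof -
  have "2 * ip n u v = (\<Sum>i<n. 2 * (u i \<bullet> v i))" by (simp add: ip_def sum_distrib_left)
  also have "\<dots> \<le> (\<Sum>i<n. \<eta> * (norm (u i))^2 + (1/\<eta>) * (norm (v i))^2)"
    by (intro sum_mono young_inner assms)
  also have "\<dots> = \<eta> * nsq n u + (1/\<eta>) * nsq n v" by (simp add: nsq_def sum.distrib sum_distrib_left)
  finally show ?thesis .
qed

lemma nsq_add_young: assumes "\<eta> > 0"
  shows "nsq n (\<lambda>i. u i + v i) \<le> (1 + \<eta>) * nsq n u + (1 + 1/\<eta>) * nsq n v"
  using nsq_add[of n u v] ip_young[OF assms, of n u v] by (simp add: algebra_simps)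

lemma nsq_diff_le: "nsq n (\<lambda>i. u i - v i) \<le> 2 * nsq n u + 2 * nsq n v"
  using nsq_diff[of n u v] ip_young[of 1 n u "\<lambda>i. - v i"]
  by (simp add: ip_def nsq_def inner_minus_right sum_negf algebra_simps)

lemma nsq_scale: "nsq n (\<lambda>i. c *\<^sub>R v i) = c^2 * nsq n v"
  by (simp add: nsq_def power_mult_distrib sum_distrib_left)

lemma sum_avg: assumes n: "n > 0" shows "(\<Sum>i<n. v i) = real n *\<^sub>R avg n v"
proof -
  have "real n *\<^sub>R avg n v = (real n * (1/real n)) *\<^sub>R (\<Sum>i<n. v i)" by (simp only: avg_def scaleR_scaleR)
  also have "real n * (1/real n) = 1" using n by simp
  finally show ?thesis by simp
qed

lemma sum_pc: assumes "n > 0" shows "(\<Sum>i<n. pc n v i) = 0"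
proof -
  have "(\<Sum>i<n. pc n v i) = (\<Sum>i<n. v i) - (\<Sum>i<n. avg n v)" by (simp add: pc_def sum_subtractf)
  also have "(\<Sum>i<n. avg n v) = real n *\<^sub>R avg n v" using sum_constant_scaleR[of "avg n v" "{..<n}"] by simp
  finally show ?thesis using sum_avg[OF assms, of v] by simp
qed

lemma sum_fgc: "(\<Sum>i<n. f i - g i + (c::real)) = (\<Sum>i<n. f i) - (\<Sum>i<n. g i) + real n * c"
  by (simp add: sum.distrib sum_subtractf)

lemma nsq_decomp: "n > 0 \<Longrightarrow> nsq n v = nsq n (pc n v) + real n * (norm (avg n v))^2"
proof -
  assume n: "n > 0"
  have s: "(\<Sum>i<n. v i) = real n *\<^sub>R avg n v" by (rule sum_avg[OF n])
  have "nsq n (pc n v) = (\<Sum>i<n. (norm (v i))^2 - 2 * (v i \<bullet> avg n v) + (norm (avg n v))^2)"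
    unfolding nsq_def pc_def by (intro sum.cong refl) (simp add: power2_norm_eq_inner inner_diff_left inner_diff_right inner_commute)
  also have "\<dots> = nsq n v - 2 * ((\<Sum>i<n. v i) \<bullet> avg n v) + real n * (norm (avg n v))^2"
    apply (subst sum_fgc)
    by (simp add: nsq_def sum_distrib_left inner_sum_left)
  also have "\<dots> = nsq n v - real n * (norm (avg n v))^2"
    unfolding s by (simp add: power2_norm_eq_inner)
  finally show ?thesis by simp
qed

lemma nsq_pc_le: "n > 0 \<Longrightarrow> nsq n (pc n v) \<le> nsq n v"
  using nsq_decomp[of n v] by simp

lemma ip_pc: assumes "(\<Sum>i<n. u i) = 0" shows "ip n u (pc n v) = ip n u v"
proof -
  have "ip n u (pc n v) = ip n u v - (\<Sum>i<n. u i) \<bullet> avg n v"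
    by (simp add: ip_def pc_def inner_diff_right sum_subtractf inner_sum_left)
  then show ?thesis using assms by simp
qed

lemma ip_pc2: "n > 0 \<Longrightarrow> ip n u (pc n v) = ip n (pc n u) v"
proof -
  assume n: "n > 0"
  have "ip n u (pc n v) = ip n u v - (\<Sum>i<n. u i) \<bullet> avg n v"
    by (simp add: ip_def pc_def inner_diff_right sum_subtractf inner_sum_left)
  moreover have "ip n (pc n u) v = ip n u v - avg n u \<bullet> (\<Sum>i<n. v i)"
    by (simp add: ip_def pc_def inner_diff_left sum_subtractf inner_sum_right)
  moreover have "(\<Sum>i<n. u i) \<bullet> avg n v = avg n u \<bullet> (\<Sum>i<n. v i)"
    using n by (simp add: avg_def inner_sum_left inner_sum_right sum_divide_distrib)
  ultimately show ?thesis by simp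
qed

definition wmT :: "nat \<Rightarrow> real mat \<Rightarrow> (nat \<Rightarrow> 'a::real_vector) \<Rightarrow> nat \<Rightarrow> 'a" where
  "wmT n W u r = (\<Sum>i<n. W $$ (i,r) *\<^sub>R u i)"

lemma ip_wm: "ip n u (wm n W v) = ip n (wmT n W u) v"
proof -
  have "ip n u (wm n W v) = (\<Sum>i<n. \<Sum>r<n. W $$ (i,r) * (u i \<bullet> v r))"
    by (simp add: ip_def wm_def inner_sum_right)
  also have "\<dots> = (\<Sum>r<n. \<Sum>i<n. W $$ (i,r) * (u i \<bullet> v r))" by (rule sum.swap)
  also have "\<dots> = ip n (wmT n W u) v" by (simp add: ip_def wmT_def inner_sum_left)
  finally show ?thesis .
qed

lemma ip_add_left: "ip n (\<lambda>i. u i + w i) v = ip n u v + ip n w v"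
  by (simp add: ip_def inner_add_left sum.distrib)
lemma ip_diff_left: "ip n (\<lambda>i. u i - w i) v = ip n u v - ip n w v"
  by (simp add: ip_def inner_diff_left sum_subtractf)
lemma ip_diff_right: "ip n u (\<lambda>i. v i - w i) = ip n u v - ip n u w"
  by (simp add: ip_def inner_diff_right sum_subtractf)
lemma ip_add_right: "ip n u (\<lambda>i. v i + w i) = ip n u v + ip n u w"
  by (simp add: ip_def inner_add_right sum.distrib)

lemma wm_add: "wm n W (\<lambda>r. u r + v r) i = wm n W u i + wm n W v i"
  by (simp add: wm_def scaleR_add_right sum.distrib)
lemma wm_diff: "wm n W (\<lambda>r. u r - v r) i = wm n W u i - wm n W v i"
  by (simp add: wm_def scaleR_diff_right sum_subtractf)
lemma wm_scale: "wm n W (\<lambda>r. c *\<^sub>R u r) i = c *\<^sub>R wm n W u i"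
  by (simp add: wm_def scaleR_sum_right mult.commute)

lemma avg_wm: "doubly_stochastic n W \<Longrightarrow> avg n (wm n W v) = avg n v"
  by (simp add: avg_def sum_wm)

lemma pc_wm: assumes DS: "doubly_stochastic n W" and i: "i < n"
  shows "pc n (wm n W v) i = wm n W (pc n v) i"
proof -
  have "wm n W (pc n v) i = wm n W v i - wm n W (\<lambda>_. avg n v) i" unfolding pc_def by (rule wm_diff)
  moreover have "wm n W (\<lambda>_. avg n v) i = avg n v" by (rule wm_const[OF DS i])
  moreover have "avg n (wm n W v) = avg n v" by (rule avg_wm[OF DS])
  ultimately show ?thesis by (simp add: pc_def)
qed

lemma nsq_cong: "(\<And>i. i < n \<Longrightarrow> u i = v i) \<Longrightarrow> nsq n u = nsq n v"
  by (simp add: nsq_def)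
lemma ip_cong: "(\<And>i. i < n \<Longrightarrow> u i = u' i) \<Longrightarrow> (\<And>i. i < n \<Longrightarrow> v i = v' i) \<Longrightarrow> ip n u v = ip n u' v'"
  by (simp add: ip_def)

lemma nsq_wm: fixes v :: "nat \<Rightarrow> 'a::euclidean_space" assumes DS: "doubly_stochastic n W" and lamd: "second_singular_value W lam" and lam1: "lam < 1"
    and s0: "(\<Sum>i<n. v i) = 0"
  shows "nsq n (wm n W v) \<le> lam^2 * nsq n v"
  using spec_vec[OF DS lamd lam1 s0] by (simp add: nsq_def)

lemma cons_err_wm: fixes v :: "nat \<Rightarrow> 'a::euclidean_space" assumes DS: "doubly_stochastic n W" and lamd: "second_singular_value W lam" and lam1: "lam < 1"
    and n: "n > 0"
  shows "cons_err n (wm n W v) \<le> lam^2 * cons_err n v"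
proof -
  have "cons_err n (wm n W v) = nsq n (wm n W (pc n v))"
    unfolding cons_err_pc by (intro nsq_cong pc_wm DS)
  also have "\<dots> \<le> lam^2 * nsq n (pc n v)" by (intro nsq_wm[OF DS lamd lam1] sum_pc n)
  finally show ?thesis by (simp add: cons_err_pc)
qed

locale saga =
  fixes n m :: nat and W :: "real mat" and \<alpha> :: real and G :: "nat \<Rightarrow> nat \<Rightarrow> 'a::euclidean_space \<Rightarrow> 'a"
    and x0 :: 'a
begin

definition "grad i v = (1 / real m) *\<^sub>R (\<Sum>j<m. G i j v)"

definition "XX \<omega> k = gx n m W \<alpha> G x0 \<omega> k"
definition "YY \<omega> k = gy n m W \<alpha> G x0 \<omega> k"
definition "ZZ \<omega> k = gz n m W \<alpha> G x0 \<omega> k"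
definition "GP \<omega> k = fst (snd (snd (gt_saga n m W \<alpha> G x0 \<omega> k)))"
definition "GG \<omega> k i = G i (fst (\<omega> (k,i))) (XX \<omega> k i) - G i (fst (\<omega> (k,i))) (ZZ \<omega> k i (fst (\<omega> (k,i))))
                + (1 / real m) *\<^sub>R (\<Sum>j<m. G i j (ZZ \<omega> k i j))"

lemma st_eq: "gt_saga n m W \<alpha> G x0 \<omega> k = (XX \<omega> k, YY \<omega> k, GP \<omega> k, ZZ \<omega> k)"
  by (simp add: XX_def YY_def ZZ_def GP_def gx_def gy_def gz_def)

lemma rec0: "XX \<omega> 0 = (\<lambda>_. x0)" "YY \<omega> 0 = (\<lambda>_. 0)" "GP \<omega> 0 = (\<lambda>_. 0)" "ZZ \<omega> 0 = (\<lambda>_ _. x0)"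
  by (simp_all add: XX_def YY_def ZZ_def GP_def gx_def gy_def gz_def)

lemma recS:
  "GP \<omega> (Suc k) = GG \<omega> k"
  "YY \<omega> (Suc k) = wm n W (\<lambda>r. YY \<omega> k r + GG \<omega> k r - GP \<omega> k r)"
  "XX \<omega> (Suc k) = wm n W (\<lambda>r. XX \<omega> k r - \<alpha> *\<^sub>R YY \<omega> (Suc k) r)"
  "ZZ \<omega> (Suc k) = (\<lambda>i j. if j = snd (\<omega> (k,i)) then XX \<omega> k i else ZZ \<omega> k i j)"
proof -
  have e: "gt_saga n m W \<alpha> G x0 \<omega> (Suc k) =
    (wm n W (\<lambda>r. XX \<omega> k r - \<alpha> *\<^sub>R wm n W (\<lambda>r. YY \<omega> k r + GG \<omega> k r - GP \<omega> k r) r),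
     wm n W (\<lambda>r. YY \<omega> k r + GG \<omega> k r - GP \<omega> k r), GG \<omega> k,
     (\<lambda>i j. if j = snd (\<omega> (k,i)) then XX \<omega> k i else ZZ \<omega> k i j))"
    unfolding gt_saga.simps(2) st_eq by (simp add: Let_def wm_def GG_def fun_eq_iff)
  show "GP \<omega> (Suc k) = GG \<omega> k" using e by (simp add: GP_def)
  show "YY \<omega> (Suc k) = wm n W (\<lambda>r. YY \<omega> k r + GG \<omega> k r - GP \<omega> k r)" using e by (simp add: YY_def gy_def)
  show "XX \<omega> (Suc k) = wm n W (\<lambda>r. XX \<omega> k r - \<alpha> *\<^sub>R YY \<omega> (Suc k) r)" using e by (simp add: XX_def YY_def gx_def gy_def)
  show "ZZ \<omega> (Suc k) = (\<lambda>i j. if j = snd (\<omega> (k,i)) then XX \<omega> k i else ZZ \<omega> k i j)" using e by (simp add: ZZ_def gz_def)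
qed

lemma st_dep: "(\<And>s i. s < k \<Longrightarrow> \<omega> (s,i) = \<omega>' (s,i)) \<Longrightarrow> gt_saga n m W \<alpha> G x0 \<omega> k = gt_saga n m W \<alpha> G x0 \<omega>' k"
proof (induction k)
  case 0 then show ?case by simp
next
  case (Suc k)
  have "gt_saga n m W \<alpha> G x0 \<omega> k = gt_saga n m W \<alpha> G x0 \<omega>' k" using Suc by auto
  moreover have "\<omega> (k,i) = \<omega>' (k,i)" for i using Suc.prems by auto
  ultimately show ?case by (simp add: Let_def fun_eq_iff)
qed

lemma dep_comp:
  assumes "\<And>s i. s < k \<Longrightarrow> \<omega> (s,i) = \<omega>' (s,i)"
  shows "XX \<omega> k = XX \<omega>' k" "YY \<omega> k = YY \<omega>' k" "ZZ \<omega> k = ZZ \<omega>' k" "GP \<omega> k = GP \<omega>' k"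
proof -
  have "gt_saga n m W \<alpha> G x0 \<omega> k = gt_saga n m W \<alpha> G x0 \<omega>' k" by (rule st_dep) (rule assms)
  then show "XX \<omega> k = XX \<omega>' k" "YY \<omega> k = YY \<omega>' k" "ZZ \<omega> k = ZZ \<omega>' k" "GP \<omega> k = GP \<omega>' k"
    by (simp_all add: st_eq)
qed


lemma avg_add3: "avg n (\<lambda>r. a r + b r - c r) = avg n a + avg n b - avg n c"
  by (simp add: avg_def sum.distrib sum_subtractf scaleR_diff_right scaleR_add_right)

lemma tracking: assumes DS: "doubly_stochastic n W" shows "avg n (YY \<omega> k) = avg n (GP \<omega> k)"
proof (induction k)
  case 0 then show ?case by (simp add: rec0 avg_def)
next
  case (Suc k)
  have "avg n (YY \<omega> (Suc k)) = avg n (\<lambda>r. YY \<omega> k r + GG \<omega> k r - GP \<omega> k r)"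
    unfolding recS(2) by (rule avg_wm[OF DS])
  also have "\<dots> = avg n (GG \<omega> k)" using Suc by (simp add: avg_add3)
  finally show ?case by (simp add: recS(1))
qed

lemma upd_dep: "(s::nat) < t \<Longrightarrow> (f((t,i) := y)) (s,i') = f (s,i')" by auto

lemma GG_upd:
  "GG (f((t,i) := y)) t i = G i (fst y) (XX f t i) - G i (fst y) (ZZ f t i (fst y))
      + (1 / real m) *\<^sub>R (\<Sum>j<m. G i j (ZZ f t i j))"
proof -
  have "XX (f((t,i) := y)) t = XX f t" "ZZ (f((t,i) := y)) t = ZZ f t"
    by (rule dep_comp; simp)+
  then show ?thesis by (simp add: GG_def)
qed

lemma pmf_S:
  assumes m: "m > 0"
  shows "finite (set_pmf (pmf_of_set ({0..<m} \<times> {0..<m})))"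
    "\<And>F. measure_pmf.expectation (pmf_of_set ({0..<m} \<times> {0..<m})) (\<lambda>y. F (fst y) :: real)
        = (1 / real m) * (\<Sum>a<m. F a)"
proof -
  have ne: "{0..<m} \<times> {0..<m} \<noteq> {}" using m by auto
  show "finite (set_pmf (pmf_of_set ({0..<m} \<times> {0..<m})))" using ne by simp
  fix F :: "nat \<Rightarrow> real"
  have "measure_pmf.expectation (pmf_of_set ({0..<m} \<times> {0..<m})) (\<lambda>y. F (fst y))
      = (\<Sum>y\<in>{0..<m} \<times> {0..<m}. F (fst y)) / real (card ({0..<m} \<times> {0..<m}))"
    using ne by (intro integral_pmf_of_set) auto
  also have "(\<Sum>y\<in>{0..<m} \<times> {0..<m}. F (fst y)) = real m * (\<Sum>a<m. F a)"
  proof -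
    have "(\<Sum>y\<in>{0..<m} \<times> {0..<m}. F (fst y)) = (\<Sum>(a,b)\<in>{0..<m} \<times> {0..<m}. F a)"
      by (simp add: case_prod_beta)
    also have "\<dots> = (\<Sum>a\<in>{0..<m}. \<Sum>b\<in>{0..<m}. F a)" by (rule sum.cartesian_product[symmetric])
    also have "\<dots> = real m * (\<Sum>a<m. F a)" by (simp add: atLeast0LessThan sum_distrib_left)
    finally show ?thesis .
  qed
  also have "card ({0..<m} \<times> {0..<m}) = m * m" by (simp add: card_cartesian_product)
  finally show "measure_pmf.expectation (pmf_of_set ({0..<m} \<times> {0..<m})) (\<lambda>y. F (fst y))
        = (1 / real m) * (\<Sum>a<m. F a)" using m by simp
qed

lemma draws_fin: "m > 0 \<Longrightarrow> finite (set_pmf (draws n m N))"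
  unfolding draws_def by (intro finite_set_Pi_pmf) (auto simp: pmf_S)

lemma err_mean_zero:
  assumes dep: "\<And>\<omega> \<omega>'. (\<And>s i. s < t \<Longrightarrow> \<omega> (s,i) = \<omega>' (s,i)) \<Longrightarrow> h \<omega> = h \<omega>'"
    and t: "t < N" and i: "i < n" and m: "m > 0"
  shows "measure_pmf.expectation (draws n m N) (\<lambda>\<omega>. h \<omega> \<bullet> (GG \<omega> t i - grad i (XX \<omega> t i))) = 0"
  unfolding draws_def
proof (rule expect_split_zero[where j = "(t,i)"])
  show "finite ({0..<N} \<times> {0..<n})" by simp
  show "(t,i) \<in> {0..<N} \<times> {0..<n}" using t i by simp
  show "finite (set_pmf (pmf_of_set ({0..<m} \<times> {0..<m})))" if "x \<in> {0..<N} \<times> {0..<n}" for x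
    using pmf_S[OF m] by simp
  fix f :: "nat \<times> nat \<Rightarrow> nat \<times> nat"
  define X where "X = XX f t i"
  define Z where "Z = ZZ f t i"
  define \<phi> where "\<phi> = (\<lambda>a. G i a X - G i a (Z a) + (1 / real m) *\<^sub>R (\<Sum>j<m. G i j (Z j)) - grad i X)"
  have hinv: "h (f((t,i) := y)) = h f" for y by (rule dep) simp
  have Xinv: "XX (f((t,i) := y)) t = XX f t" for y by (rule dep_comp) simp
  have eq: "h (f((t,i) := y)) \<bullet> (GG (f((t,i) := y)) t i - grad i (XX (f((t,i) := y)) t i)) = h f \<bullet> \<phi> (fst y)" for y
    unfolding hinv Xinv GG_upd \<phi>_def X_def Z_def by simp
  have sphi: "(\<Sum>a<m. \<phi> a) = 0"
  proof -
    have "(\<Sum>a<m. \<phi> a) = (\<Sum>a<m. G i a X) - (\<Sum>a<m. G i a (Z a)) + real m *\<^sub>R ((1 / real m) *\<^sub>R (\<Sum>j<m. G i j (Z j)))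
        - real m *\<^sub>R grad i X"
      unfolding \<phi>_def by (simp add: sum.distrib sum_subtractf sum_constant_scaleR)
    also have "\<dots> = 0" using m by (simp add: grad_def)
    finally show ?thesis .
  qed
  show "measure_pmf.expectation (pmf_of_set ({0..<m} \<times> {0..<m}))
          (\<lambda>y. h (f((t,i) := y)) \<bullet> (GG (f((t,i) := y)) t i - grad i (XX (f((t,i) := y)) t i))) = 0"
    unfolding eq pmf_S(2)[OF m, of "\<lambda>a. h f \<bullet> \<phi> a"] by (simp add: inner_sum_right[symmetric] sphi)
qed


lemma err_var:
  assumes smooth: "\<And>j x y. j < m \<Longrightarrow> norm (G i j x - G i j y) \<le> L * norm (x - y)"
    and t: "t < N" and i: "i < n" and m: "m > 0" and L: "L \<ge> 0"
  shows "measure_pmf.expectation (draws n m N) (\<lambda>\<omega>. (norm (GG \<omega> t i - grad i (XX \<omega> t i)))^2)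
    \<le> measure_pmf.expectation (draws n m N) (\<lambda>\<omega>. L^2 * ((1 / real m) * (\<Sum>j<m. (norm (XX \<omega> t i - ZZ \<omega> t i j))^2)))"
  unfolding draws_def
proof (rule expect_split_le[where j = "(t,i)"])
  show "finite ({0..<N} \<times> {0..<n})" by simp
  show "(t,i) \<in> {0..<N} \<times> {0..<n}" using t i by simp
  show "finite (set_pmf (pmf_of_set ({0..<m} \<times> {0..<m})))" if "x \<in> {0..<N} \<times> {0..<n}" for x
    using pmf_S[OF m] by simp
  fix f :: "nat \<times> nat \<Rightarrow> nat \<times> nat" and y
  have Xinv: "XX (f((t,i) := y)) t = XX f t" by (rule dep_comp) simp
  have Zinv: "ZZ (f((t,i) := y)) t = ZZ f t" by (rule dep_comp) simp
  show "L^2 * ((1 / real m) * (\<Sum>j<m. (norm (XX (f((t,i) := y)) t i - ZZ (f((t,i) := y)) t i j))^2))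
      = L^2 * ((1 / real m) * (\<Sum>j<m. (norm (XX f t i - ZZ f t i j))^2))"
    unfolding Xinv Zinv ..
next
  fix f :: "nat \<times> nat \<Rightarrow> nat \<times> nat"
  define X where "X = XX f t i"
  define Z where "Z = ZZ f t i"
  define \<psi> where "\<psi> = (\<lambda>a. G i a X - G i a (Z a))"
  define \<phi> where "\<phi> = (\<lambda>a. G i a X - G i a (Z a) + (1 / real m) *\<^sub>R (\<Sum>j<m. G i j (Z j)) - grad i X)"
  have Xinv: "XX (f((t,i) := y)) t = XX f t" for y by (rule dep_comp) simp
  have eq: "(norm (GG (f((t,i) := y)) t i - grad i (XX (f((t,i) := y)) t i)))^2 = (norm (\<phi> (fst y)))^2" for y
    unfolding Xinv GG_upd \<phi>_def X_def Z_def by simp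
  have avgpsi: "avg m \<psi> = grad i X - (1 / real m) *\<^sub>R (\<Sum>j<m. G i j (Z j))"
    unfolding avg_def \<psi>_def grad_def by (simp add: sum_subtractf scaleR_diff_right)
  have phipc: "\<phi> a = pc m \<psi> a" for a
    unfolding pc_def avgpsi unfolding \<phi>_def \<psi>_def by (simp add: algebra_simps)
  have "(\<Sum>a<m. (norm (\<phi> a))^2) = nsq m (pc m \<psi>)" unfolding nsq_def phipc ..
  also have "\<dots> \<le> nsq m \<psi>" using nsq_pc_le m by blast
  also have "\<dots> \<le> (\<Sum>a<m. L^2 * (norm (X - Z a))^2)"
    unfolding nsq_def \<psi>_def
  proof (rule sum_mono)
    fix a assume "a \<in> {..<m}"
    then have "norm (G i a X - G i a (Z a)) \<le> L * norm (X - Z a)" using smooth by simp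
    then have "(norm (G i a X - G i a (Z a)))^2 \<le> (L * norm (X - Z a))^2" by (intro power_mono) auto
    then show "(norm (G i a X - G i a (Z a)))^2 \<le> L^2 * (norm (X - Z a))^2" by (simp add: power_mult_distrib)
  qed
  finally have le: "(\<Sum>a<m. (norm (\<phi> a))^2) \<le> L^2 * (\<Sum>a<m. (norm (X - Z a))^2)"
    by (simp add: sum_distrib_left)
  show "measure_pmf.expectation (pmf_of_set ({0..<m} \<times> {0..<m}))
          (\<lambda>y. (norm (GG (f((t,i) := y)) t i - grad i (XX (f((t,i) := y)) t i)))^2)
      \<le> L^2 * ((1 / real m) * (\<Sum>j<m. (norm (XX f t i - ZZ f t i j))^2))"
    unfolding eq pmf_S(2)[OF m, of "\<lambda>a. (norm (\<phi> a))^2"]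
    using le m unfolding X_def[symmetric] Z_def[symmetric]
    by (simp add: field_simps)
qed

end

context saga begin

definition "ev \<omega> t i = GG \<omega> t i - grad i (XX \<omega> t i)"
definition "Uv \<omega> k = pc n (\<lambda>i. YY \<omega> (Suc k) i + grad i (XX \<omega> (Suc k) i) - GG \<omega> k i)"
definition "cv \<omega> k = wm n W (pc n (\<lambda>r. YY \<omega> k r - GP \<omega> k r + grad r (XX \<omega> k r)))"
definition "dx \<omega> k i = XX \<omega> (Suc k) i - XX \<omega> k i"
definition "SS \<omega> t = (\<Sum>i<n. (1/real m) * (\<Sum>j<m. (norm (XX \<omega> t i - ZZ \<omega> t i j))^2))"
definition "TT \<omega> t = (\<Sum>i<n. (1/real m) * (\<Sum>j<m. (norm (avg n (XX \<omega> t) - ZZ \<omega> t i j))^2))"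
definition "gv \<omega> t = (\<lambda>i. grad i (XX \<omega> t i))"

lemma pc_add: "pc n (\<lambda>i. a i + b i) i = pc n a i + pc n b i"
  by (simp add: pc_def avg_def sum.distrib scaleR_add_right)
lemma pc_diff: "pc n (\<lambda>i. a i - b i) i = pc n a i - pc n b i"
  by (simp add: pc_def avg_def sum_subtractf scaleR_diff_right)

lemma pw_a:
  assumes DS: "doubly_stochastic n W" and lamd: "second_singular_value W lam" and lam1: "lam < 1"
    and n: "n > 0"
  shows "cons_err n (YY \<omega> (Suc (Suc k))) \<le>
      lam^2 * (nsq n (Uv \<omega> k) + 2 * ip n (Uv \<omega> k) (ev \<omega> (Suc k)) + nsq n (ev \<omega> (Suc k)))"
proof -
  let ?v = "\<lambda>r. YY \<omega> (Suc k) r + GG \<omega> (Suc k) r - GP \<omega> (Suc k) r"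
  have "cons_err n (YY \<omega> (Suc (Suc k))) = cons_err n (wm n W ?v)" by (simp only: recS(2))
  also have "\<dots> \<le> lam^2 * cons_err n ?v" by (rule cons_err_wm[OF DS lamd lam1 n])
  also have "cons_err n ?v = nsq n (\<lambda>i. Uv \<omega> k i + pc n (ev \<omega> (Suc k)) i)"
    unfolding cons_err_pc
  proof (rule nsq_cong)
    fix i assume "i < n"
    have "?v = (\<lambda>r. (YY \<omega> (Suc k) r + grad r (XX \<omega> (Suc k) r) - GG \<omega> k r) + ev \<omega> (Suc k) r)"
      by (simp add: recS(1) ev_def fun_eq_iff algebra_simps)
    then show "pc n ?v i = Uv \<omega> k i + pc n (ev \<omega> (Suc k)) i"
      by (simp add: pc_add Uv_def)
  qed
  also have "\<dots> = nsq n (Uv \<omega> k) + 2 * ip n (Uv \<omega> k) (ev \<omega> (Suc k)) + nsq n (pc n (ev \<omega> (Suc k)))"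
    unfolding nsq_add ip_pc[OF sum_pc[OF n]] Uv_def ..
  also have "\<dots> \<le> nsq n (Uv \<omega> k) + 2 * ip n (Uv \<omega> k) (ev \<omega> (Suc k)) + nsq n (ev \<omega> (Suc k))"
    using nsq_pc_le[OF n] by simp
  finally show ?thesis using lam1 by (simp add: mult_left_mono)
qed


lemma grad_lip:
  assumes smooth: "\<And>j x y. j < m \<Longrightarrow> norm (G i j x - G i j y) \<le> L * norm (x - y)" and m: "m > 0"
  shows "norm (grad i a - grad i b) \<le> L * norm (a - b)"
proof -
  have "grad i a - grad i b = (1 / real m) *\<^sub>R (\<Sum>j<m. G i j a - G i j b)"
    by (simp add: grad_def sum_subtractf scaleR_diff_right)
  then have "norm (grad i a - grad i b) = (1 / real m) * norm (\<Sum>j<m. G i j a - G i j b)" by simp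
  also have "\<dots> \<le> (1 / real m) * (\<Sum>j<m. norm (G i j a - G i j b))"
    by (intro mult_left_mono norm_sum) auto
  also have "\<dots> \<le> (1 / real m) * (\<Sum>j<m. L * norm (a - b))"
    by (intro mult_left_mono sum_mono smooth) auto
  also have "\<dots> = L * norm (a - b)" using m by simp
  finally show ?thesis .
qed

lemma pw_b:
  assumes DS: "doubly_stochastic n W" and lamd: "second_singular_value W lam" and lam1: "lam < 1"
    and n: "n > 0" and m: "m > 0" and eta: "\<eta> > 0" and L: "L \<ge> 0"
    and smooth: "\<And>i j x y. i < n \<Longrightarrow> j < m \<Longrightarrow> norm (G i j x - G i j y) \<le> L * norm (x - y)"
  shows "nsq n (Uv \<omega> k) \<le> (1 + \<eta>) * (cons_err n (YY \<omega> (Suc k)) - 2 * ip n (pc n (cv \<omega> k)) (ev \<omega> k)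
            + 4 * nsq n (ev \<omega> k)) + (1 + 1/\<eta>) * (L^2 * nsq n (dx \<omega> k))"
proof -
  define e where "e = ev \<omega> k"
  define c where "c = cv \<omega> k"
  define B where "B = (\<lambda>i. wm n W (pc n e) i - pc n e i)"
  define d where "d = (\<lambda>i. grad i (XX \<omega> (Suc k) i) - grad i (XX \<omega> k i))"
  have q1: "lam^2 \<le> 1"
  proof -
    have "lam \<ge> 0" using lamd unfolding second_singular_value_def singular_values_def
      by (auto simp: nth_mem)
    then show ?thesis using lam1 by (simp add: power_le_one)
  qed
  define A where "A = (\<lambda>r. YY \<omega> k r - GP \<omega> k r + grad r (XX \<omega> k r))"
  have pcy1: "pc n (YY \<omega> (Suc k)) i = c i + wm n W (pc n e) i" if i: "i < n" for i
  proof -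
    have v: "(\<lambda>r. YY \<omega> k r + GG \<omega> k r - GP \<omega> k r) = (\<lambda>r. A r + e r)"
      by (simp add: e_def ev_def A_def fun_eq_iff algebra_simps)
    have pcv: "pc n (\<lambda>r. A r + e r) = (\<lambda>r. pc n A r + pc n e r)" by (simp add: fun_eq_iff pc_add)
    have "pc n (YY \<omega> (Suc k)) i = wm n W (pc n (\<lambda>r. YY \<omega> k r + GG \<omega> k r - GP \<omega> k r)) i"
      unfolding recS(2) by (rule pc_wm[OF DS i])
    also have "\<dots> = wm n W (\<lambda>r. pc n A r + pc n e r) i"
      unfolding v pcv ..
    also have "\<dots> = c i + wm n W (pc n e) i" unfolding wm_add c_def cv_def A_def ..
    finally show ?thesis .
  qed
  have Ueq: "Uv \<omega> k i = (c i + B i) + pc n d i" if i: "i < n" for i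
  proof -
    have g: "GG \<omega> k = (\<lambda>r. grad r (XX \<omega> k r) + e r)" by (simp add: e_def ev_def fun_eq_iff)
    have "Uv \<omega> k i = pc n (YY \<omega> (Suc k)) i + pc n (\<lambda>i. grad i (XX \<omega> (Suc k) i)) i
        - (pc n (\<lambda>r. grad r (XX \<omega> k r)) i + pc n e i)"
      unfolding Uv_def g by (simp add: pc_add pc_diff)
    also have "\<dots> = (c i + B i) + pc n d i"
      unfolding pcy1[OF i] B_def d_def by (simp add: pc_diff algebra_simps)
    finally show ?thesis .
  qed
  have "nsq n (Uv \<omega> k) = nsq n (\<lambda>i. (c i + B i) + pc n d i)" using Ueq by (intro nsq_cong) auto
  also have "\<dots> \<le> (1 + \<eta>) * nsq n (\<lambda>i. c i + B i) + (1 + 1/\<eta>) * nsq n (pc n d)"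
    by (rule nsq_add_young[OF eta])
  also have "nsq n (\<lambda>i. c i + B i) \<le> cons_err n (YY \<omega> (Suc k)) - 2 * ip n (pc n c) e + 4 * nsq n e"
  proof -
    have ce: "cons_err n (YY \<omega> (Suc k)) = nsq n c + 2 * ip n c (wm n W (pc n e)) + nsq n (wm n W (pc n e))"
      unfolding cons_err_pc nsq_add[symmetric] using pcy1 by (intro nsq_cong) auto
    have ipB: "ip n c B = ip n c (wm n W (pc n e)) - ip n (pc n c) e"
      unfolding B_def ip_diff_right ip_pc2[OF n] ..
    have w: "nsq n (wm n W (pc n e)) \<le> lam^2 * nsq n (pc n e)"
      by (rule nsq_wm[OF DS lamd lam1 sum_pc[OF n]])
    have pe: "nsq n (pc n e) \<le> nsq n e" by (rule nsq_pc_le[OF n])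
    have nB: "nsq n B \<le> 2 * nsq n (wm n W (pc n e)) + 2 * nsq n (pc n e)"
      unfolding B_def by (rule nsq_diff_le)
    have "lam^2 * nsq n (pc n e) \<le> nsq n (pc n e)" using q1 nsq_nonneg[of n "pc n e"]
      by (simp add: mult_left_le_one_le)
    then have key: "nsq n B \<le> nsq n (wm n W (pc n e)) + 4 * nsq n e"
      using w pe nB nsq_nonneg[of n "wm n W (pc n e)"] nsq_nonneg[of n e] by linarith
    have "nsq n (\<lambda>i. c i + B i) = nsq n c + 2 * ip n c B + nsq n B" by (rule nsq_add)
    then show ?thesis using ce ipB key by linarith
  qed
  also have "nsq n (pc n d) \<le> L^2 * nsq n (dx \<omega> k)"
  proof -
    have "nsq n (pc n d) \<le> nsq n d" by (rule nsq_pc_le[OF n])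
    also have "\<dots> \<le> (\<Sum>i<n. L^2 * (norm (dx \<omega> k i))^2)"
      unfolding nsq_def
    proof (rule sum_mono)
      fix i assume "i \<in> {..<n}"
      then have "norm (d i) \<le> L * norm (dx \<omega> k i)"
        unfolding d_def dx_def by (intro grad_lip[OF _ m] smooth) auto
      then have "(norm (d i))^2 \<le> (L * norm (dx \<omega> k i))^2" by (intro power_mono) auto
      then show "(norm (d i))^2 \<le> L^2 * (norm (dx \<omega> k i))^2" by (simp add: power_mult_distrib)
    qed
    also have "\<dots> = L^2 * nsq n (dx \<omega> k)" by (simp add: nsq_def sum_distrib_left)
    finally show ?thesis .
  qed
  finally show ?thesis using eta unfolding e_def c_def by (simp add: mult_left_mono)
qed


lemma lam_facts:
  assumes lamd: "second_singular_value W lam" and lam1: "lam < 1"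
  shows "lam \<ge> 0" "lam^2 \<le> 1" "lam^2 < 1"
proof -
  show l0: "lam \<ge> 0" using lamd unfolding second_singular_value_def singular_values_def
    by (auto simp: nth_mem)
  show "lam^2 \<le> 1" using l0 lam1 by (simp add: power_le_one)
  show "lam^2 < 1" using l0 lam1 by (simp add: power_less_one_iff abs_square_less_1)
qed

lemma pw_c:
  assumes DS: "doubly_stochastic n W" and lamd: "second_singular_value W lam" and lam1: "lam < 1"
    and n: "n > 0"
  shows "nsq n (dx \<omega> k) \<le> 6 * cons_err n (XX \<omega> k) + 3 * \<alpha>^2 * (lam^2 * cons_err n (YY \<omega> (Suc k))
      + real n * (norm (avg n (gv \<omega> k)))^2 + 2 * ip n (\<lambda>_. avg n (gv \<omega> k)) (ev \<omega> k) + nsq n (ev \<omega> k))"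
proof -
  define x where "x = XX \<omega> k"
  define y1 where "y1 = YY \<omega> (Suc k)"
  define e where "e = ev \<omega> k"
  define a where "a = avg n (gv \<omega> k)"
  have q1: "lam^2 \<le> 1" using lam_facts[OF lamd lam1] by simp
  define u where "u = (\<lambda>i. wm n W (pc n x) i - pc n x i)"
  define v where "v = (\<lambda>i. (- \<alpha>) *\<^sub>R wm n W y1 i)"
  have dxe: "dx \<omega> k i = u i + v i" if i: "i < n" for i
  proof -
    have "XX \<omega> (Suc k) i = wm n W x i - \<alpha> *\<^sub>R wm n W y1 i"
      unfolding recS(3) wm_diff wm_scale x_def y1_def ..
    moreover have "wm n W x i = wm n W (pc n x) i + avg n x"
    proof -
      have h1: "pc n (wm n W x) i = wm n W (pc n x) i" by (rule pc_wm[OF DS i])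
      have h2: "pc n (wm n W x) i = wm n W x i - avg n x" by (simp add: pc_def avg_wm[OF DS])
      from h1 h2 show ?thesis by (metis diff_add_cancel)
    qed
    ultimately show ?thesis unfolding dx_def u_def v_def x_def[symmetric] by (simp add: pc_def algebra_simps)
  qed
  have "nsq n (dx \<omega> k) = nsq n (\<lambda>i. u i + v i)" using dxe by (intro nsq_cong) auto
  also have "\<dots> \<le> (1 + 1/2) * nsq n u + (1 + 1/(1/2)) * nsq n v"
    by (rule nsq_add_young) simp
  finally have h1: "nsq n (dx \<omega> k) \<le> (3/2) * nsq n u + 3 * nsq n v" by simp
  have h2: "nsq n u \<le> 4 * cons_err n x"
  proof -
    have "nsq n u \<le> 2 * nsq n (wm n W (pc n x)) + 2 * nsq n (pc n x)" unfolding u_def by (rule nsq_diff_le)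
    moreover have "nsq n (wm n W (pc n x)) \<le> lam^2 * nsq n (pc n x)"
      by (rule nsq_wm[OF DS lamd lam1 sum_pc[OF n]])
    moreover have "lam^2 * nsq n (pc n x) \<le> nsq n (pc n x)"
      using q1 nsq_nonneg[of n "pc n x"] by (simp add: mult_left_le_one_le)
    ultimately show ?thesis unfolding cons_err_pc by linarith
  qed
  have h3: "nsq n v = \<alpha>^2 * nsq n (wm n W y1)" unfolding v_def nsq_scale by simp
  have h4: "nsq n (wm n W y1) \<le> lam^2 * cons_err n y1 + real n * (norm a)^2 + 2 * ip n (\<lambda>_. a) e + nsq n e"
  proof -
    have d1: "nsq n (wm n W y1) = cons_err n (wm n W y1) + real n * (norm (avg n (wm n W y1)))^2"
      unfolding cons_err_pc by (rule nsq_decomp[OF n])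
    have d2: "cons_err n (wm n W y1) \<le> lam^2 * cons_err n y1" by (rule cons_err_wm[OF DS lamd lam1 n])
    have avgy: "avg n (wm n W y1) = a + avg n e"
    proof -
      have "avg n (wm n W y1) = avg n y1" by (rule avg_wm[OF DS])
      also have "\<dots> = avg n (GG \<omega> k)" unfolding y1_def tracking[OF DS] recS(1) ..
      also have "GG \<omega> k = (\<lambda>i. gv \<omega> k i + e i)" by (simp add: e_def ev_def gv_def fun_eq_iff)
      also have "avg n (\<lambda>i. gv \<omega> k i + e i) = a + avg n e"
        by (simp add: a_def avg_def sum.distrib scaleR_add_right)
      finally show ?thesis .
    qed
    have d3: "real n * (norm (a + avg n e))^2 = real n * (norm a)^2 + 2 * ip n (\<lambda>_. a) e + real n * (norm (avg n e))^2"
    proof -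
      have "ip n (\<lambda>_. a) e = a \<bullet> (\<Sum>i<n. e i)" by (simp add: ip_def inner_sum_right)
      also have "\<dots> = real n * (a \<bullet> avg n e)" unfolding sum_avg[OF n] by simp
      finally have "ip n (\<lambda>_. a) e = real n * (a \<bullet> avg n e)" .
      then show ?thesis by (simp add: power2_norm_eq_inner inner_add_left inner_add_right inner_commute algebra_simps)
    qed
    have d4: "real n * (norm (avg n e))^2 \<le> nsq n e"
      using nsq_decomp[OF n, of e] nsq_nonneg[of n "pc n e"] by linarith
    show ?thesis using d1 d2 d3 d4 unfolding avgy by linarith
  qed
  have "\<alpha>^2 * nsq n (wm n W y1) \<le> \<alpha>^2 * (lam^2 * cons_err n y1 + real n * (norm a)^2 + 2 * ip n (\<lambda>_. a) e + nsq n e)"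
    using h4 by (rule mult_left_mono) simp
  then have "nsq n (dx \<omega> k) \<le> 6 * cons_err n x + 3 * \<alpha>^2 * (lam^2 * cons_err n y1 + real n * (norm a)^2 + 2 * ip n (\<lambda>_. a) e + nsq n e)"
    using h1 h2 h3 by linarith
  then show ?thesis unfolding x_def y1_def e_def a_def .
qed


lemma norm_sq_tri: fixes a b c :: "'b::real_inner"
  shows "(norm (a - c))^2 \<le> 2 * (norm (a - b))^2 + 2 * (norm (b - c))^2"
proof -
  have "(norm (a - c))^2 = (norm ((a - b) + (b - c)))^2" by simp
  also have "\<dots> = (norm (a - b))^2 + 2 * ((a - b) \<bullet> (b - c)) + (norm (b - c))^2"
    by (simp only: power2_norm_eq_inner inner_add_left inner_add_right inner_commute[of "b - c" "a - b"])
  also have "2 * ((a - b) \<bullet> (b - c)) \<le> 1 * (norm (a - b))^2 + (1/1) * (norm (b - c))^2"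
    by (rule young_inner) simp
  finally show ?thesis by simp
qed

lemma pw_d:
  assumes m: "m > 0"
  shows "SS \<omega> (Suc k) \<le> 2 * nsq n (dx \<omega> k) + 2 * SS \<omega> k"
proof -
  have "SS \<omega> (Suc k) \<le> (\<Sum>i<n. (1/real m) * (\<Sum>j<m. 2 * (norm (dx \<omega> k i))^2 + 2 * (norm (XX \<omega> k i - ZZ \<omega> k i j))^2))"
    unfolding SS_def
  proof (intro sum_mono mult_left_mono)
    fix i j
    show "(norm (XX \<omega> (Suc k) i - ZZ \<omega> (Suc k) i j))^2 \<le> 2 * (norm (dx \<omega> k i))^2 + 2 * (norm (XX \<omega> k i - ZZ \<omega> k i j))^2"
    proof (cases "j = snd (\<omega> (k,i))")
      case True
      then show ?thesis by (simp add: recS(4) dx_def)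
    next
      case False
      then show ?thesis using norm_sq_tri[of "XX \<omega> (Suc k) i" "ZZ \<omega> k i j" "XX \<omega> k i"]
        by (simp add: recS(4) dx_def)
    qed
  qed simp
  also have "\<dots> = 2 * nsq n (dx \<omega> k) + 2 * SS \<omega> k"
    using m by (simp add: SS_def nsq_def sum.distrib sum_distrib_left distrib_left)
  finally show ?thesis .
qed

lemma pw_e:
  assumes m: "m > 0"
  shows "SS \<omega> k \<le> 2 * cons_err n (XX \<omega> k) + 2 * TT \<omega> k"
proof -
  have "SS \<omega> k \<le> (\<Sum>i<n. (1/real m) * (\<Sum>j<m. 2 * (norm (XX \<omega> k i - avg n (XX \<omega> k)))^2
        + 2 * (norm (avg n (XX \<omega> k) - ZZ \<omega> k i j))^2))"
    unfolding SS_def by (intro sum_mono mult_left_mono norm_sq_tri) simp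
  also have "\<dots> = 2 * cons_err n (XX \<omega> k) + 2 * TT \<omega> k"
    using m by (simp add: TT_def cons_err_def sum.distrib sum_distrib_left distrib_left)
  finally show ?thesis .
qed



end

lemma final_arith:
  fixes q L A2 a Xe Te D En En1 ENd S0 S1 EU LHS \<eta> :: real
  assumes q: "0 < q" "q < 1" and L: "L > 0" and A2: "A2 \<ge> 0" and al: "A2 * L^2 * q \<le> (1-q)^2/256"
    and nn: "a \<ge> 0" "Xe \<ge> 0" "Te \<ge> 0" "D \<ge> 0" "En \<ge> 0" "ENd \<ge> 0" "S0 \<ge> 0"
    and eta: "\<eta> = (1 - q) / (3 * q)"
    and h1: "LHS \<le> q * (EU + En1)"
    and h2: "EU \<le> (1 + \<eta>) * (a + 4 * En) + (1 + 1/\<eta>) * (L^2 * ENd)"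
    and h3: "ENd \<le> 6 * Xe + 3 * A2 * (q * a + D + En)"
    and h4: "En1 \<le> L^2 * S1" and h5: "S1 \<le> 2 * ENd + 2 * S0"
    and h6: "En \<le> L^2 * S0" and h7: "S0 \<le> 2 * Xe + 2 * Te"
  shows "LHS \<le> (1 + q) / 2 * a + 30.5 * L^2 / (1 - q) * Xe + 97 / 8 * L^2 * Te
                + 16 * q * A2 * L^2 / (1 - q) * D"
proof -
  have q1: "1 - q > 0" using q by simp
  define c1 where "c1 = (1 + 2*q)/3"
  define c2 where "c2 = q * (1 + 1/\<eta>)"
  define c3 where "c3 = 3 * q / (1 - q)"
  define P where "P = L^2 * ENd"
  define S where "S = L^2 * S0"
  define X where "X = L^2 * Xe"
  define T where "T = L^2 * Te"
  define Z where "Z = 1 / (1 - q) * X"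
  define \<kappa> where "\<kappa> = 3 * c3 * A2 * L^2"
  have e1: "q * (1 + \<eta>) = c1" unfolding c1_def using eta q by (simp add: field_simps)
  have e2: "c2 + 2 * q = c3" unfolding c2_def c3_def eta using q q1 by (simp add: field_simps)
  have f1: "LHS \<le> q * EU + q * En1" using h1 by (simp add: distrib_left)
  have f2: "q * EU \<le> c1 * a + 4 * (c1 * En) + c2 * P"
  proof -
    have "q * EU \<le> q * ((1 + \<eta>) * (a + 4 * En) + (1 + 1/\<eta>) * P)"
      using h2 q unfolding P_def by (intro mult_left_mono) auto
    also have "\<dots> = (q * (1 + \<eta>)) * a + 4 * ((q * (1 + \<eta>)) * En) + c2 * P"
      unfolding c2_def by (simp add: algebra_simps)
    finally show ?thesis unfolding e1 .
  qed
  have f3: "q * En1 \<le> 2 * (q * P) + 2 * (q * S)"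
  proof -
    have "q * En1 \<le> q * (L^2 * S1)" using h4 q by (intro mult_left_mono) auto
    also have "\<dots> \<le> q * (L^2 * (2 * ENd + 2 * S0))" using h5 q by (intro mult_left_mono) auto
    also have "\<dots> = 2 * (q * P) + 2 * (q * S)" unfolding P_def S_def by (simp add: algebra_simps)
    finally show ?thesis .
  qed
  have f4: "c2 * P + 2 * (q * P) = c3 * P" using e2 by (simp add: algebra_simps flip: e2)
  have c3nn: "c3 \<ge> 0" unfolding c3_def using q q1 by simp
  have f5: "c3 * P \<le> 6 * (c3 * X) + \<kappa> * (q * a) + \<kappa> * D + \<kappa> * En"
  proof -
    have "c3 * P \<le> c3 * (L^2 * (6 * Xe + 3 * A2 * (q * a + D + En)))"
      unfolding P_def using h3 c3nn by (intro mult_left_mono) auto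
    also have "\<dots> = 6 * (c3 * X) + \<kappa> * (q * a) + \<kappa> * D + \<kappa> * En"
      unfolding \<kappa>_def X_def by (simp add: algebra_simps)
    finally show ?thesis .
  qed
  have kap0: "\<kappa> \<ge> 0" unfolding \<kappa>_def using c3nn A2 by simp
  have kap: "\<kappa> \<le> 9 * (1 - q) / 256"
  proof -
    have "\<kappa> = 9 / (1 - q) * (A2 * L^2 * q)" unfolding \<kappa>_def c3_def by (simp add: field_simps)
    also have "\<dots> \<le> 9 / (1 - q) * ((1-q)^2/256)" using al q1 by (intro mult_left_mono) auto
    also have "\<dots> = 9 * (1 - q) / 256" using q1 by (simp add: field_simps power2_eq_square)
    finally show ?thesis .
  qed
  have g1: "\<kappa> * (q * a) \<le> (1 + q) / 2 * a - c1 * a"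
  proof -
    have "\<kappa> * q \<le> \<kappa>" using kap0 q by (simp add: mult_left_le)
    also have "\<dots> \<le> (1 + q) / 2 - c1"
    proof -
      have E: "(1 + q) / 2 - c1 = (1 - q) / 6" unfolding c1_def by (simp add: field_simps)
      have "9 * (1 - q) / 256 \<le> (1 - q) / 6" using q by simp
      with kap have "\<kappa> \<le> (1 - q) / 6" by (rule order_trans)
      then show ?thesis unfolding E .
    qed
    finally have "\<kappa> * q \<le> (1 + q) / 2 - c1" .
    then have "(\<kappa> * q) * a \<le> ((1 + q) / 2 - c1) * a" using nn(1) by (intro mult_right_mono) auto
    then show ?thesis by (simp add: algebra_simps)
  qed
  have g2: "\<kappa> * En \<le> 9 / 256 * En"
  proof -
    have "\<kappa> \<le> 9 / 256" using kap q by simp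
    then show ?thesis using nn(5) by (intro mult_right_mono) auto
  qed
  have g3: "c1 * En \<le> En"
  proof -
    have "c1 \<le> 1" unfolding c1_def using q by simp
    then show ?thesis using nn(5) by (intro mult_left_le_one_le) (auto simp: c1_def q(1) less_imp_le)
  qed
  have g4: "En \<le> S" using h6 unfolding S_def .
  have Snn: "S \<ge> 0" unfolding S_def using nn(7) by simp
  have g5: "q * S \<le> S" using q Snn by (simp add: mult_left_le_one_le)
  have g6: "S \<le> 2 * X + 2 * T"
  proof -
    have "S \<le> L^2 * (2 * Xe + 2 * Te)" unfolding S_def using h7 by (intro mult_left_mono) auto
    then show ?thesis unfolding X_def T_def by (simp add: algebra_simps)
  qed
  have Xnn: "X \<ge> 0" unfolding X_def using nn(2) by simp
  have Tnn: "T \<ge> 0" unfolding T_def using nn(3) by simp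
  have g7: "c3 * X \<le> 3 * Z"
  proof -
    have "c3 \<le> 3 / (1 - q)" unfolding c3_def using q q1 by (simp add: divide_right_mono)
    then have "c3 * X \<le> 3 / (1 - q) * X" using Xnn by (intro mult_right_mono) auto
    then show ?thesis unfolding Z_def by simp
  qed
  have g8: "X \<le> Z"
  proof -
    have "1 \<le> 1 / (1 - q)" using q q1 by (simp add: field_simps)
    then have "1 * X \<le> 1 / (1 - q) * X" using Xnn by (intro mult_right_mono) auto
    then show ?thesis unfolding Z_def by simp
  qed
  have g9: "\<kappa> * D \<le> 16 * q * A2 * L^2 / (1 - q) * D"
  proof -
    have "\<kappa> = 9 * q * A2 * L^2 / (1 - q)" unfolding \<kappa>_def c3_def by (simp add: field_simps)
    also have "\<dots> \<le> 16 * q * A2 * L^2 / (1 - q)" using q q1 A2 by (intro divide_right_mono) auto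
    finally show ?thesis using nn(4) by (intro mult_right_mono) auto
  qed
  have z: "30.5 * L^2 / (1 - q) * Xe = 30.5 * Z" unfolding Z_def X_def by simp
  have t: "97 / 8 * L^2 * Te = 97/8 * T" unfolding T_def by simp
  show ?thesis unfolding z t
    using f1 f2 f3 f4 f5 g1 g2 g3 g4 g5 g6 g7 g8 g9 Xnn Tnn Snn nn(5) by linarith
qed

context saga begin
lemma intg: "m > 0 \<Longrightarrow> integrable (measure_pmf (draws n m N)) (f :: _ \<Rightarrow> real)"
  by (rule integrable_measure_pmf_finite[OF draws_fin])

lemma ip_zero:
  assumes dep: "\<And>i \<omega> \<omega>'. (\<And>s i'. s < t \<Longrightarrow> \<omega> (s,i') = \<omega>' (s,i')) \<Longrightarrow> h \<omega> i = h \<omega>' i"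
    and t: "t < N" and m: "m > 0"
  shows "measure_pmf.expectation (draws n m N) (\<lambda>\<omega>. ip n (h \<omega>) (ev \<omega> t)) = 0"
proof -
  have "measure_pmf.expectation (draws n m N) (\<lambda>\<omega>. ip n (h \<omega>) (ev \<omega> t))
      = (\<Sum>i<n. measure_pmf.expectation (draws n m N) (\<lambda>\<omega>. h \<omega> i \<bullet> (GG \<omega> t i - grad i (XX \<omega> t i))))"
    unfolding ip_def ev_def by (rule Bochner_Integration.integral_sum) (rule intg[OF m])
  also have "\<dots> = 0"
  proof (rule sum.neutral, rule ballI)
    fix i assume i: "i \<in> {..<n}"
    then have i': "i < n" by simp
    show "measure_pmf.expectation (draws n m N) (\<lambda>\<omega>. h \<omega> i \<bullet> (GG \<omega> t i - grad i (XX \<omega> t i))) = 0"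
      by (rule err_mean_zero[where h="\<lambda>\<omega>. h \<omega> i", OF dep[where i=i] t i' m])
  qed
  finally show ?thesis .
qed

lemma nsq_err_exp:
  assumes smooth: "\<And>i j x y. i < n \<Longrightarrow> j < m \<Longrightarrow> norm (G i j x - G i j y) \<le> L * norm (x - y)"
    and t: "t < N" and m: "m > 0" and L: "L \<ge> 0"
  shows "measure_pmf.expectation (draws n m N) (\<lambda>\<omega>. nsq n (ev \<omega> t))
      \<le> L^2 * measure_pmf.expectation (draws n m N) (\<lambda>\<omega>. SS \<omega> t)"
proof -
  have "measure_pmf.expectation (draws n m N) (\<lambda>\<omega>. nsq n (ev \<omega> t))
      = (\<Sum>i<n. measure_pmf.expectation (draws n m N) (\<lambda>\<omega>. (norm (GG \<omega> t i - grad i (XX \<omega> t i)))^2))"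
    unfolding nsq_def ev_def by (rule Bochner_Integration.integral_sum) (rule intg[OF m])
  also have "\<dots> \<le> (\<Sum>i<n. measure_pmf.expectation (draws n m N)
        (\<lambda>\<omega>. L^2 * ((1 / real m) * (\<Sum>j<m. (norm (XX \<omega> t i - ZZ \<omega> t i j))^2))))"
    by (intro sum_mono err_var[OF _ t _ m L] smooth) auto
  also have "\<dots> = (\<Sum>i<n. L^2 * measure_pmf.expectation (draws n m N)
        (\<lambda>\<omega>. (1 / real m) * (\<Sum>j<m. (norm (XX \<omega> t i - ZZ \<omega> t i j))^2)))"
    by (simp only: integral_mult_right_zero)
  also have "\<dots> = L^2 * (\<Sum>i<n. measure_pmf.expectation (draws n m N)
        (\<lambda>\<omega>. (1 / real m) * (\<Sum>j<m. (norm (XX \<omega> t i - ZZ \<omega> t i j))^2)))"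
    by (simp only: sum_distrib_left)
  also have "\<dots> = L^2 * measure_pmf.expectation (draws n m N) (\<lambda>\<omega>. SS \<omega> t)"
    unfolding SS_def by (subst Bochner_Integration.integral_sum) (auto intro: intg[OF m])
  finally show ?thesis .
qed


lemma main_bound:
  assumes DS: "doubly_stochastic n W" and lamd: "second_singular_value W lam" and lam1: "lam < 1"
    and lampos: "lam > 0" and n: "n > 0" and m: "m > 0" and L: "L > 0"
    and smooth: "\<And>i j x y. i < n \<Longrightarrow> j < m \<Longrightarrow> norm (G i j x - G i j y) \<le> L * norm (x - y)"
    and al: "\<alpha>^2 * L^2 * lam^2 \<le> (1 - lam^2)^2 / 256"
  shows "measure_pmf.expectation (draws n m (Suc (Suc k))) (\<lambda>\<omega>. cons_err n (YY \<omega> (Suc (Suc k))))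
     \<le> (1 + lam^2) / 2 * measure_pmf.expectation (draws n m (Suc (Suc k))) (\<lambda>\<omega>. cons_err n (YY \<omega> (Suc k)))
       + 30.5 * L^2 / (1 - lam^2) * measure_pmf.expectation (draws n m (Suc (Suc k))) (\<lambda>\<omega>. cons_err n (XX \<omega> k))
       + 97 / 8 * L^2 * measure_pmf.expectation (draws n m (Suc (Suc k))) (\<lambda>\<omega>. TT \<omega> k)
       + 16 * lam^2 * \<alpha>^2 * L^2 / (1 - lam^2) *
           measure_pmf.expectation (draws n m (Suc (Suc k))) (\<lambda>\<omega>. real n * (norm (avg n (gv \<omega> k)))^2)"
proof -
  define M where "M = draws n m (Suc (Suc k))"
  define E :: "((nat \<times> nat \<Rightarrow> nat \<times> nat) \<Rightarrow> real) \<Rightarrow> real" where "E = (\<lambda>f. measure_pmf.expectation M f)"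
  have I: "integrable (measure_pmf M) f" for f :: "_ \<Rightarrow> real" unfolding M_def by (rule intg[OF m])
  have Eadd: "E (\<lambda>\<omega>. f \<omega> + g \<omega>) = E f + E g" for f g
    unfolding E_def by (rule Bochner_Integration.integral_add[OF I I])
  have Ediff: "E (\<lambda>\<omega>. f \<omega> - g \<omega>) = E f - E g" for f g
    unfolding E_def by (rule Bochner_Integration.integral_diff[OF I I])
  have Emult: "E (\<lambda>\<omega>. c * f \<omega>) = c * E f" for c f
    unfolding E_def by (rule integral_mult_right_zero)
  have Emono: "E f \<le> E g" if "\<And>\<omega>. f \<omega> \<le> g \<omega>" for f g
    unfolding E_def by (rule integral_mono[OF I I]) (use that in auto)
  have Enn: "E f \<ge> 0" if "\<And>\<omega>. f \<omega> \<ge> 0" for f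
    unfolding E_def by (rule integral_nonneg_AE) (use that in auto)
  define q where "q = lam^2"
  have q: "0 < q" "q < 1" using lam_facts[OF lamd lam1] lampos unfolding q_def by auto
  define \<eta> where "\<eta> = (1 - q) / (3 * q)"
  have eta: "\<eta> > 0" unfolding \<eta>_def using q by simp
  have Z1: "E (\<lambda>\<omega>. ip n (Uv \<omega> k) (ev \<omega> (Suc k))) = 0"
    unfolding E_def M_def
  proof (rule ip_zero[OF _ _ m])
    fix i and \<omega> \<omega>' :: "nat \<times> nat \<Rightarrow> nat \<times> nat" assume h: "\<And>s i'. s < Suc k \<Longrightarrow> \<omega> (s,i') = \<omega>' (s,i')"
    have "Uv \<omega> k = pc n (\<lambda>i. YY \<omega> (Suc k) i + grad i (XX \<omega> (Suc k) i) - GP \<omega> (Suc k) i)"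
      unfolding Uv_def recS(1) ..
    also have "\<dots> = pc n (\<lambda>i. YY \<omega>' (Suc k) i + grad i (XX \<omega>' (Suc k) i) - GP \<omega>' (Suc k) i)"
    proof -
      have "XX \<omega> (Suc k) = XX \<omega>' (Suc k)" "YY \<omega> (Suc k) = YY \<omega>' (Suc k)" "GP \<omega> (Suc k) = GP \<omega>' (Suc k)"
        by (rule dep_comp, rule h, assumption)+
      then show ?thesis by simp
    qed
    also have "\<dots> = Uv \<omega>' k" unfolding Uv_def recS(1) ..
    finally show "Uv \<omega> k i = Uv \<omega>' k i" by simp
  qed simp
  have Z2: "E (\<lambda>\<omega>. ip n (pc n (cv \<omega> k)) (ev \<omega> k)) = 0"
    unfolding E_def M_def
  proof (rule ip_zero[OF _ _ m])
    fix i and \<omega> \<omega>' :: "nat \<times> nat \<Rightarrow> nat \<times> nat" assume h: "\<And>s i'. s < k \<Longrightarrow> \<omega> (s,i') = \<omega>' (s,i')"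
    show "pc n (cv \<omega> k) i = pc n (cv \<omega>' k) i" 
    proof -
      have "XX \<omega> k = XX \<omega>' k" "YY \<omega> k = YY \<omega>' k" "GP \<omega> k = GP \<omega>' k"
        by (rule dep_comp, rule h, assumption)+
      then show ?thesis unfolding cv_def by simp
    qed
  qed simp
  have Z3: "E (\<lambda>\<omega>. ip n (\<lambda>_. avg n (gv \<omega> k)) (ev \<omega> k)) = 0"
    unfolding E_def M_def
  proof (rule ip_zero[OF _ _ m])
    fix i and \<omega> \<omega>' :: "nat \<times> nat \<Rightarrow> nat \<times> nat" assume h: "\<And>s i'. s < k \<Longrightarrow> \<omega> (s,i') = \<omega>' (s,i')"
    show "avg n (gv \<omega> k) = avg n (gv \<omega>' k)" 
    proof -
      have "XX \<omega> k = XX \<omega>' k" by (rule dep_comp, rule h, assumption)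
      then show ?thesis unfolding gv_def by simp
    qed
  qed simp
  have h1: "E (\<lambda>\<omega>. cons_err n (YY \<omega> (Suc (Suc k)))) \<le> q * (E (\<lambda>\<omega>. nsq n (Uv \<omega> k)) + E (\<lambda>\<omega>. nsq n (ev \<omega> (Suc k))))"
  proof -
    have "E (\<lambda>\<omega>. cons_err n (YY \<omega> (Suc (Suc k))))
        \<le> E (\<lambda>\<omega>. q * (nsq n (Uv \<omega> k) + 2 * ip n (Uv \<omega> k) (ev \<omega> (Suc k)) + nsq n (ev \<omega> (Suc k))))"
      unfolding q_def by (rule Emono) (rule pw_a[OF DS lamd lam1 n])
    also have "\<dots> = q * (E (\<lambda>\<omega>. nsq n (Uv \<omega> k)) + 2 * E (\<lambda>\<omega>. ip n (Uv \<omega> k) (ev \<omega> (Suc k))) + E (\<lambda>\<omega>. nsq n (ev \<omega> (Suc k))))"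
      by (simp only: Emult Eadd)
    finally show ?thesis using Z1 by simp
  qed
  have h2: "E (\<lambda>\<omega>. nsq n (Uv \<omega> k)) \<le> (1 + \<eta>) * (E (\<lambda>\<omega>. cons_err n (YY \<omega> (Suc k))) + 4 * E (\<lambda>\<omega>. nsq n (ev \<omega> k)))
      + (1 + 1/\<eta>) * (L^2 * E (\<lambda>\<omega>. nsq n (dx \<omega> k)))"
  proof -
    have "E (\<lambda>\<omega>. nsq n (Uv \<omega> k)) \<le> E (\<lambda>\<omega>. (1 + \<eta>) * (cons_err n (YY \<omega> (Suc k)) - 2 * ip n (pc n (cv \<omega> k)) (ev \<omega> k)
            + 4 * nsq n (ev \<omega> k)) + (1 + 1/\<eta>) * (L^2 * nsq n (dx \<omega> k)))"
      by (rule Emono) (rule pw_b[OF DS lamd lam1 n m eta _ smooth], use L in auto)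
    also have "\<dots> = (1 + \<eta>) * (E (\<lambda>\<omega>. cons_err n (YY \<omega> (Suc k))) - 2 * E (\<lambda>\<omega>. ip n (pc n (cv \<omega> k)) (ev \<omega> k))
            + 4 * E (\<lambda>\<omega>. nsq n (ev \<omega> k))) + (1 + 1/\<eta>) * (L^2 * E (\<lambda>\<omega>. nsq n (dx \<omega> k)))"
      by (simp only: Emult Eadd Ediff)
    finally show ?thesis using Z2 by simp
  qed
  have h3: "E (\<lambda>\<omega>. nsq n (dx \<omega> k)) \<le> 6 * E (\<lambda>\<omega>. cons_err n (XX \<omega> k)) + 3 * \<alpha>^2 * (q * E (\<lambda>\<omega>. cons_err n (YY \<omega> (Suc k)))
      + E (\<lambda>\<omega>. real n * (norm (avg n (gv \<omega> k)))^2) + E (\<lambda>\<omega>. nsq n (ev \<omega> k)))"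
  proof -
    have "E (\<lambda>\<omega>. nsq n (dx \<omega> k)) \<le> E (\<lambda>\<omega>. 6 * cons_err n (XX \<omega> k) + 3 * \<alpha>^2 * (q * cons_err n (YY \<omega> (Suc k))
      + real n * (norm (avg n (gv \<omega> k)))^2 + 2 * ip n (\<lambda>_. avg n (gv \<omega> k)) (ev \<omega> k) + nsq n (ev \<omega> k)))"
      unfolding q_def by (rule Emono) (rule pw_c[OF DS lamd lam1 n])
    also have "\<dots> = 6 * E (\<lambda>\<omega>. cons_err n (XX \<omega> k)) + 3 * \<alpha>^2 * (q * E (\<lambda>\<omega>. cons_err n (YY \<omega> (Suc k)))
      + E (\<lambda>\<omega>. real n * (norm (avg n (gv \<omega> k)))^2) + 2 * E (\<lambda>\<omega>. ip n (\<lambda>_. avg n (gv \<omega> k)) (ev \<omega> k))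
      + E (\<lambda>\<omega>. nsq n (ev \<omega> k)))"
      by (simp only: Emult Eadd)
    finally show ?thesis using Z3 by simp
  qed
  have h4: "E (\<lambda>\<omega>. nsq n (ev \<omega> (Suc k))) \<le> L^2 * E (\<lambda>\<omega>. SS \<omega> (Suc k))"
    unfolding E_def M_def by (rule nsq_err_exp[OF smooth _ m]) (use L in auto)
  have h5: "E (\<lambda>\<omega>. SS \<omega> (Suc k)) \<le> 2 * E (\<lambda>\<omega>. nsq n (dx \<omega> k)) + 2 * E (\<lambda>\<omega>. SS \<omega> k)"
  proof -
    have "E (\<lambda>\<omega>. SS \<omega> (Suc k)) \<le> E (\<lambda>\<omega>. 2 * nsq n (dx \<omega> k) + 2 * SS \<omega> k)"
      by (rule Emono) (rule pw_d[OF m])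
    then show ?thesis by (simp only: Emult Eadd)
  qed
  have h6: "E (\<lambda>\<omega>. nsq n (ev \<omega> k)) \<le> L^2 * E (\<lambda>\<omega>. SS \<omega> k)"
    unfolding E_def M_def by (rule nsq_err_exp[OF smooth _ m]) (use L in auto)
  have h7: "E (\<lambda>\<omega>. SS \<omega> k) \<le> 2 * E (\<lambda>\<omega>. cons_err n (XX \<omega> k)) + 2 * E (\<lambda>\<omega>. TT \<omega> k)"
  proof -
    have "E (\<lambda>\<omega>. SS \<omega> k) \<le> E (\<lambda>\<omega>. 2 * cons_err n (XX \<omega> k) + 2 * TT \<omega> k)"
      by (rule Emono) (rule pw_e[OF m])
    then show ?thesis by (simp only: Emult Eadd)
  qed
  have nn: "E (\<lambda>\<omega>. cons_err n (YY \<omega> (Suc k))) \<ge> 0" "E (\<lambda>\<omega>. cons_err n (XX \<omega> k)) \<ge> 0"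
    "E (\<lambda>\<omega>. TT \<omega> k) \<ge> 0" "E (\<lambda>\<omega>. real n * (norm (avg n (gv \<omega> k)))^2) \<ge> 0"
    "E (\<lambda>\<omega>. nsq n (ev \<omega> k)) \<ge> 0" "E (\<lambda>\<omega>. nsq n (dx \<omega> k)) \<ge> 0" "E (\<lambda>\<omega>. SS \<omega> k) \<ge> 0"
    by (intro Enn; simp add: cons_err_def TT_def SS_def nsq_def sum_nonneg)+
  have al': "\<alpha>^2 * L^2 * q \<le> (1-q)^2/256" using al unfolding q_def .
  have "E (\<lambda>\<omega>. cons_err n (YY \<omega> (Suc (Suc k)))) \<le> (1 + q) / 2 * E (\<lambda>\<omega>. cons_err n (YY \<omega> (Suc k)))
      + 30.5 * L^2 / (1 - q) * E (\<lambda>\<omega>. cons_err n (XX \<omega> k)) + 97 / 8 * L^2 * E (\<lambda>\<omega>. TT \<omega> k)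
      + 16 * q * \<alpha>^2 * L^2 / (1 - q) * E (\<lambda>\<omega>. real n * (norm (avg n (gv \<omega> k)))^2)"
    by (rule final_arith[OF q L _ al' nn \<eta>_def h1 h2 h3 h4 h5 h6 h7]) simp
  then show ?thesis unfolding E_def M_def q_def .
qed

end

theorem lemma12:
  fixes n m :: nat and f :: "nat \<Rightarrow> nat \<Rightarrow> 'a::euclidean_space \<Rightarrow> real"
    and G :: "nat \<Rightarrow> nat \<Rightarrow> 'a \<Rightarrow> 'a" and L \<alpha> lam :: real and W :: "real mat" and x0 :: 'a
    and k :: nat
  assumes n: "n \<ge> 1" and m: "m \<ge> 1"
    and grad: "\<And>i j x. i < n \<Longrightarrow> j < m \<Longrightarrow> (f i j has_derivative (\<lambda>h. G i j x \<bullet> h)) (at x)"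
    and L: "L > 0"
    and smooth: "\<And>i j x y. i < n \<Longrightarrow> j < m \<Longrightarrow> norm (G i j x - G i j y) \<le> L * norm (x - y)"
    and Fbdd: "bdd_below (range (\<lambda>x. (1 / real n) * (\<Sum>i<n. (1 / real m) * (\<Sum>j<m. f i j x))))"
    and W: "doubly_stochastic n W" "nonneg_mat W" "primitive_mat W"
    and lam: "second_singular_value W lam"
    and alpha_pos: "\<alpha> > 0"
    and alpha1: "lam = 0 \<or> \<alpha> \<le> (1 - lam^2) / (16 * lam) * (1 / L)"
    and alpha2: "\<alpha> \<le> sqrt (real n) / sqrt (8 * real m) * (1 / L)"
  shows
   "(let P = draws n m (k + 2);
         X = gx n m W \<alpha> G x0; Y = gy n m W \<alpha> G x0; Z = gz n m W \<alpha> G x0;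
         E = measure_pmf.expectation P
     in E (\<lambda>\<omega>. cons_err n (Y \<omega> (k + 2)))
        \<le> (1 + lam^2) / 2 * E (\<lambda>\<omega>. cons_err n (Y \<omega> (k + 1)))
          + 30.5 * L^2 / (1 - lam^2) * E (\<lambda>\<omega>. cons_err n (X \<omega> k))
          + 97 * L^2 * real n / 8 *
              E (\<lambda>\<omega>. (1 / real n) * (\<Sum>i<n. (1 / real m) *
                        (\<Sum>j<m. (norm (avg n (X \<omega> k) - Z \<omega> k i j))^2)))
          + 16 * lam^2 * \<alpha>^2 * L^2 * real n / (1 - lam^2) *
              E (\<lambda>\<omega>. (norm (avg n (\<lambda>i. (1 / real m) *\<^sub>R (\<Sum>j<m. G i j (X \<omega> k i)))))^2))"
proof -
  interpret S: saga n m W \<alpha> G x0 .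
  have n0: "n > 0" and m0: "m > 0" using n m by auto
  have lam0: "lam \<ge> 0" using lam unfolding second_singular_value_def singular_values_def
    by (auto simp: nth_mem)
  define M where "M = draws n m (Suc (Suc k))"
  define E :: "((nat \<times> nat \<Rightarrow> nat \<times> nat) \<Rightarrow> real) \<Rightarrow> real" where "E = (\<lambda>f. measure_pmf.expectation M f)"
  have Enn: "E f \<ge> 0" if "\<And>\<omega>. f \<omega> \<ge> 0" for f
    unfolding E_def by (rule integral_nonneg_AE) (use that in auto)
  have XX: "gx n m W \<alpha> G x0 = S.XX" by (simp add: fun_eq_iff S.XX_def)
  have YY: "gy n m W \<alpha> G x0 = S.YY" by (simp add: fun_eq_iff S.YY_def)
  have ZZ: "gz n m W \<alpha> G x0 = S.ZZ" by (simp add: fun_eq_iff S.ZZ_def)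
  have k2: "k + 2 = Suc (Suc k)" "k + 1 = Suc k" by simp_all
  have TTe: "E (\<lambda>\<omega>. (1 / real n) * (\<Sum>i<n. (1 / real m) * (\<Sum>j<m. (norm (avg n (S.XX \<omega> k) - S.ZZ \<omega> k i j))^2)))
      = (1 / real n) * E (\<lambda>\<omega>. S.TT \<omega> k)"
    unfolding E_def S.TT_def by (rule integral_mult_right_zero)
  have gve: "E (\<lambda>\<omega>. real n * (norm (avg n (S.gv \<omega> k)))^2)
      = real n * E (\<lambda>\<omega>. (norm (avg n (\<lambda>i. (1 / real m) *\<^sub>R (\<Sum>j<m. G i j (S.XX \<omega> k i)))))^2)"
    unfolding E_def S.gv_def S.grad_def by (rule integral_mult_right_zero)
  have goal: "E (\<lambda>\<omega>. cons_err n (S.YY \<omega> (Suc (Suc k))))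
      \<le> (1 + lam^2) / 2 * E (\<lambda>\<omega>. cons_err n (S.YY \<omega> (Suc k)))
        + 30.5 * L^2 / (1 - lam^2) * E (\<lambda>\<omega>. cons_err n (S.XX \<omega> k))
        + 97 / 8 * L^2 * E (\<lambda>\<omega>. S.TT \<omega> k)
        + 16 * lam^2 * \<alpha>^2 * L^2 / (1 - lam^2) * E (\<lambda>\<omega>. real n * (norm (avg n (S.gv \<omega> k)))^2)"
  proof (cases "lam = 0")
    case True
    have "cons_err n (S.YY \<omega> (Suc (Suc k))) = 0" for \<omega>
    proof -
      have "cons_err n (S.YY \<omega> (Suc (Suc k))) \<le> lam^2 * cons_err n (\<lambda>r. S.YY \<omega> (Suc k) r + S.GG \<omega> (Suc k) r - S.GP \<omega> (Suc k) r)"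
        unfolding S.recS(2) by (rule cons_err_wm[OF W(1) lam _ n0]) (simp add: True)
      moreover have "cons_err n (S.YY \<omega> (Suc (Suc k))) \<ge> 0" by (simp add: cons_err_def sum_nonneg)
      ultimately show ?thesis using True by simp
    qed
    then have "E (\<lambda>\<omega>. cons_err n (S.YY \<omega> (Suc (Suc k)))) = 0" by (simp add: E_def)
    moreover have "E (\<lambda>\<omega>. cons_err n (S.YY \<omega> (Suc k))) \<ge> 0" "E (\<lambda>\<omega>. cons_err n (S.XX \<omega> k)) \<ge> 0"
      "E (\<lambda>\<omega>. S.TT \<omega> k) \<ge> 0"
      by (intro Enn; simp add: cons_err_def S.TT_def sum_nonneg)+
    ultimately show ?thesis using True L by simp
  next
    case False
    then have lpos: "lam > 0" using lam0 by simp
    have a1: "\<alpha> \<le> (1 - lam^2) / (16 * lam) * (1 / L)" using alpha1 False by simp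
    have "(1 - lam^2) / (16 * lam) * (1 / L) > 0" using a1 alpha_pos by linarith
    then have "1 - lam^2 > 0" using lpos L mult_pos_pos[OF L lpos]
      by (auto simp: zero_less_mult_iff zero_less_divide_iff mult.commute)
    then have lam1: "lam < 1" using lam0 by (smt (verit) one_le_power)
    have "\<alpha> * (16 * lam * L) \<le> (1 - lam^2) / (16 * lam) * (1 / L) * (16 * lam * L)"
      using a1 lpos L by (intro mult_right_mono) auto
    also have "\<dots> = 1 - lam^2" using lpos L by (simp add: field_simps)
    finally have "\<alpha> * L * lam \<le> (1 - lam^2) / 16" by (simp add: field_simps)
    then have "(\<alpha> * L * lam)^2 \<le> ((1 - lam^2) / 16)^2"
      using alpha_pos L lpos by (intro power_mono) auto
    then have al: "\<alpha>^2 * L^2 * lam^2 \<le> (1 - lam^2)^2 / 256" by (simp add: power_mult_distrib power_divide)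
    show ?thesis
      unfolding E_def M_def
      by (rule S.main_bound[OF W(1) lam lam1 lpos n0 m0 L smooth al])
  qed
  have "E (\<lambda>\<omega>. cons_err n (S.YY \<omega> (Suc (Suc k))))
      \<le> (1 + lam^2) / 2 * E (\<lambda>\<omega>. cons_err n (S.YY \<omega> (Suc k)))
        + 30.5 * L^2 / (1 - lam^2) * E (\<lambda>\<omega>. cons_err n (S.XX \<omega> k))
        + 97 * L^2 * real n / 8 * E (\<lambda>\<omega>. (1 / real n) * (\<Sum>i<n. (1 / real m) * (\<Sum>j<m. (norm (avg n (S.XX \<omega> k) - S.ZZ \<omega> k i j))^2)))
        + 16 * lam^2 * \<alpha>^2 * L^2 * real n / (1 - lam^2) * E (\<lambda>\<omega>. (norm (avg n (\<lambda>i. (1 / real m) *\<^sub>R (\<Sum>j<m. G i j (S.XX \<omega> k i)))))^2)"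
    using goal n0 unfolding TTe gve by (simp add: field_simps)
  then show ?thesis unfolding Let_def XX YY ZZ k2 E_def M_def .
qed

end
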